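(* For any encoding-decoding functions $(f^{(n)},g^{(n)})$ such that \begin{align} \frac{1}{n}\log L&\leq R^{\mathrm{c}},~ \frac{1}{n}\log M\geq R^{\mathrm{i}}, \end{align} given any deterministic function $h^{(n)}$ and any distortion level $D$, we have \begin{align} \mathrm{P}_\mathrm{c}^{(n)}(f^{(n)},g^{(n)},h^{(n)},D) &\leq P_{W\mathbf{T}}\Bigg\{\bigcap_{i=1}^7\mathcal{A}_i(W)\Bigg\}+6e^{-n\eta}. \end{align}
   Context: Setting (content identification with lossy recovery): finite alphabets $\mathcal{X},\mathcal{Y},\mathcal{Z},\hat{\mathcal{X}}$, distortion $d$ with $d(x^n,\hat{x}^n)=\frac1n\sum_i d(x_i,\hat{x}_i)$. $M$ feature vectors $X^n(m)$ i.i.d. $P_X^n$; $Y^n(m)$ is the output of DMC $P_{Y|X}$ with input $X^n(m)$; $S(m)=f^{(n)}(Y^n(m))\in\{1,\ldots,L\}$ with deterministic $f^{(n)}$; $W$ uniform on $\{1,\ldots,M\}$ independent of all; $Z^n$ is the output of DMC $P_{Z|X}$ with input $X^n(W)$; $\hat{W}=g^{(n)}(S(1),\ldots,S(M),Z^n)$, with decoding regions $\mathcal{D}(s^M,w)=\{z^n:g^{(n)}(s^M,z^n)=w\}$; $\hat{X}^n=h^{(n)}(S(\hat{W}),Z^n)$. $\mathrm{P}_\mathrm{c}^{(n)}(f^{(n)},g^{(n)},h^{(n)},D)=\Pr\{\hat{W}=W,~d(X^n(W),\hat{X}^n)\leq D\}$. Let $\mathbf{t}=(x^n(1),\ldots,x^n(M),y^n(1),\ldots,y^n(M),s(1),\ldots,s(M),z^n,\hat{x}^n)$,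 and let $P_{W\mathbf{T}}$ be the joint distribution of $(W,\mathbf{T})$ with $\mathbf{T}=(X^n(1..M),Y^n(1..M),S(1..M),Z^n,\hat{X}^n)$, where (as a bound device) $\hat{X}^n$ is generated as $h^{(n)}(S(W),Z^n)$, i.e. $P_{W\mathbf{T}}(w,\mathbf{t})=\frac{1}{M}\prod_{m=1}^M P_X^n(x^n(m))P_{Y|X}^n(y^n(m)|x^n(m))1\{s(m)=f^{(n)}(y^n(m))\}\cdot P_{Z|X}^n(z^n|x^n(w))1\{\hat{x}^n=h^{(n)}(s(w),z^n)\}$. For every $w$ the joint law of $(X^n(w),Y^n(w),S(w),Z^n,\hat{X}^n)$ under $P_{W\mathbf{T}}$ given $W=w$ is the same distribution $P_{X^nY^nSZ^n\hat{X}^n}$; all $P$'s below ($P_{Y^n},P_{Z^n|Y^n},P_{X^n|Y^nZ^n},P_{X^nY^n|SZ^n},P_{Y^nZ^n},P_{Z^n|S}$) are induced by it. Let $Q_{Y^n},Q_{Z^n|SY^n},Q_{X^n|SY^nZ^n},Q_{X^nY^n|SZ^n\hat{X}^n},Q_{Y^nZ^n|S},Q_{Z^n}$ be arbitrary distributions and $\eta>0$. For $w\in\{1,\ldots,M\}$ define the sets of $\mathbf{t}$: $\mathcal{A}_1(w):\ \frac{1}{n}\log\frac{P_{Y^n}(y^n(w))}{Q_{Y^n}(y^n(w))}\geq -\eta$; $\mathcal{A}_2(w):\ \frac{1}{n}\log\frac{P_{Z^n|Y^n}(z^n|y^n(w))}{Q_{Z^n|SY^n}(z^n|s(w),y^n(w))}\geq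 -\eta$; $\mathcal{A}_3(w):\ \frac{1}{n}\log\frac{P_{X^n|Y^nZ^n}(x^n(w)|y^n(w),z^n)}{Q_{X^n|SY^nZ^n}(x^n(w)|s(w),y^n(w),z^n)}\geq -\eta$; $\mathcal{A}_4(w):\ \frac{1}{n}\log\frac{P_{X^nY^n|SZ^n}(x^n(w),y^n(w)|s(w),z^n)}{Q_{X^nY^n|SZ^n\hat{X}^n}(x^n(w),y^n(w)|s(w),z^n,\hat{x}^n)}\geq -\eta$; $\mathcal{A}_5(w):\ R^{\mathrm{c}}\geq \frac{1}{n}\log \frac{Q_{Y^nZ^n|S}(y^n(w),z^n|s(w))}{P_{Y^nZ^n}(y^n(w),z^n)}-\eta$; $\mathcal{A}_6(w):\ R^{\mathrm{i}}\leq \frac{1}{n}\log\frac{P_{Z^n|S}(z^n|s(w))}{Q_{Z^n}(z^n)}+\eta$; $\mathcal{A}_7(w):\ d(x^n(w),\hat{x}^n)\leq D$. *)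

theory Defs
  imports "HOL-Probability.Probability_Mass_Function" "HOL-Library.Extended_Real"
begin

definition seqs :: "nat \<Rightarrow> 'a list set" where
  "seqs n = {xs. length xs = n}"

definition pn :: "'a pmf \<Rightarrow> 'a list \<Rightarrow> real" where
  "pn P xs = (\<Prod>i<length xs. pmf P (xs ! i))"

definition chn :: "('a \<Rightarrow> 'b pmf) \<Rightarrow> 'a list \<Rightarrow> 'b list \<Rightarrow> real" where
  "chn W xs ys = (\<Prod>i<length xs. pmf (W (xs ! i)) (ys ! i))"

definition dist_n :: "('a \<Rightarrow> 'b \<Rightarrow> real) \<Rightarrow> 'a list \<Rightarrow> 'b list \<Rightarrow> real" where
  "dist_n d xs ys = (\<Sum>i<length xs. d (xs ! i) (ys ! i)) / real (length xs)"

definition llr :: "real \<Rightarrow> real \<Rightarrow> ereal" where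
  "llr a b = (if a = 0 then -\<infinity> else if b = 0 then \<infinity> else ereal (ln (a / b)))"

text \<open>Probability of correct identification and reconstruction
  Pr{ What = W, d(X^n(W), Xh^n) <= D }.\<close>
definition Pc ::
  "nat \<Rightarrow> nat \<Rightarrow> 'x pmf \<Rightarrow> ('x \<Rightarrow> 'y pmf) \<Rightarrow> ('x \<Rightarrow> 'z pmf)
   \<Rightarrow> ('y list \<Rightarrow> nat) \<Rightarrow> ((nat \<Rightarrow> nat) \<Rightarrow> 'z list \<Rightarrow> nat) \<Rightarrow> (nat \<Rightarrow> 'z list \<Rightarrow> 'xh list)
   \<Rightarrow> ('x \<Rightarrow> 'xh \<Rightarrow> real) \<Rightarrow> real \<Rightarrow> real" where
  "Pc n M PX PYX PZX f g h d D =
     (\<Sum>w\<in>{1..M}. \<Sum>xs\<in>PiE {1..M} (\<lambda>_. seqs n). \<Sum>ys\<in>PiE {1..M} (\<lambda>_. seqs n). \<Sum>z\<in>seqs n.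
        let ss = restrict (\<lambda>m. f (ys m)) {1..M} in
        (1 / real M) * (\<Prod>m\<in>{1..M}. pn PX (xs m) * chn PYX (xs m) (ys m))
        * chn PZX (xs w) z
        * (if g ss z = w \<and> dist_n d (xs w) (h (ss w) z) \<le> D then 1 else 0))"

text \<open>Joint law P_{X^n Y^n S Z^n Xh^n} of the quantities attached to a single index.\<close>
definition joint1 ::
  "'x pmf \<Rightarrow> ('x \<Rightarrow> 'y pmf) \<Rightarrow> ('x \<Rightarrow> 'z pmf) \<Rightarrow> ('y list \<Rightarrow> nat) \<Rightarrow> (nat \<Rightarrow> 'z list \<Rightarrow> 'xh list)
   \<Rightarrow> 'x list \<times> 'y list \<times> nat \<times> 'z list \<times> 'xh list \<Rightarrow> real" where
  "joint1 PX PYX PZX f h = (\<lambda>(x, y, s, z, xh).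
     pn PX x * chn PYX x y * (if s = f y then 1 else 0) * chn PZX x z * (if xh = h s z then 1 else 0))"

definition T1 :: "nat \<Rightarrow> nat \<Rightarrow> ('x list \<times> 'y list \<times> nat \<times> 'z list \<times> 'xh list) set" where
  "T1 n L = seqs n \<times> seqs n \<times> {1..L} \<times> seqs n \<times> seqs n"

definition Pm ::
  "('x list \<times> 'y list \<times> nat \<times> 'z list \<times> 'xh list \<Rightarrow> real) \<Rightarrow> nat \<Rightarrow> nat
   \<Rightarrow> ('x list \<times> 'y list \<times> nat \<times> 'z list \<times> 'xh list \<Rightarrow> bool) \<Rightarrow> real" where
  "Pm J n L E = (\<Sum>t\<in>{t\<in>T1 n L. E t}. J t)"

definition PY where "PY J n L y = Pm J n L (\<lambda>(x', y', s', z', xh'). y' = y)"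
definition PYZ where "PYZ J n L y z = Pm J n L (\<lambda>(x', y', s', z', xh'). y' = y \<and> z' = z)"
definition PS where "PS J n L s = Pm J n L (\<lambda>(x', y', s', z', xh'). s' = s)"
definition PSZ where "PSZ J n L s z = Pm J n L (\<lambda>(x', y', s', z', xh'). s' = s \<and> z' = z)"
definition PZgY where "PZgY J n L z y = PYZ J n L y z / PY J n L y"
definition PXgYZ where
  "PXgYZ J n L x y z = Pm J n L (\<lambda>(x', y', s', z', xh'). x' = x \<and> y' = y \<and> z' = z) / PYZ J n L y z"
definition PXYgSZ where
  "PXYgSZ J n L x y s z =
     Pm J n L (\<lambda>(x', y', s', z', xh'). x' = x \<and> y' = y \<and> s' = s \<and> z' = z) / PSZ J n L s z"
definition PZgS where "PZgS J n L z s = PSZ J n L s z / PS J n L s"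

type_synonym ('x, 'y, 'z, 'xh) tup =
  "(nat \<Rightarrow> 'x list) \<times> (nat \<Rightarrow> 'y list) \<times> (nat \<Rightarrow> nat) \<times> 'z list \<times> 'xh list"

definition PWT ::
  "nat \<Rightarrow> 'x pmf \<Rightarrow> ('x \<Rightarrow> 'y pmf) \<Rightarrow> ('x \<Rightarrow> 'z pmf) \<Rightarrow> ('y list \<Rightarrow> nat) \<Rightarrow> (nat \<Rightarrow> 'z list \<Rightarrow> 'xh list)
   \<Rightarrow> nat \<times> ('x, 'y, 'z, 'xh) tup \<Rightarrow> real" where
  "PWT M PX PYX PZX f h = (\<lambda>(w, xs, ys, ss, z, xh).
     (1 / real M) * (\<Prod>m\<in>{1..M}. pn PX (xs m) * chn PYX (xs m) (ys m) * (if ss m = f (ys m) then 1 else 0))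
     * chn PZX (xs w) z * (if xh = h (ss w) z then 1 else 0))"

definition TW :: "nat \<Rightarrow> nat \<Rightarrow> nat \<Rightarrow> (nat \<times> ('x, 'y, 'z, 'xh) tup) set" where
  "TW n M L = {1..M} \<times> (PiE {1..M} (\<lambda>_. seqs n) \<times> PiE {1..M} (\<lambda>_. seqs n)
               \<times> PiE {1..M} (\<lambda>_. {1..L}) \<times> seqs n \<times> seqs n)"

definition PrWT ::
  "nat \<Rightarrow> nat \<Rightarrow> nat \<Rightarrow> 'x pmf \<Rightarrow> ('x \<Rightarrow> 'y pmf) \<Rightarrow> ('x \<Rightarrow> 'z pmf) \<Rightarrow> ('y list \<Rightarrow> nat)
   \<Rightarrow> (nat \<Rightarrow> 'z list \<Rightarrow> 'xh list) \<Rightarrow> (nat \<times> ('x, 'y, 'z, 'xh) tup) set \<Rightarrow> real" where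
  "PrWT n M L PX PYX PZX f h E = (\<Sum>p\<in>TW n M L \<inter> E. PWT M PX PYX PZX f h p)"

definition A1 where
  "A1 J n L QY \<eta> w = {(xs, ys, ss, z, xh). 
     ereal (1 / real n) * llr (PY J n L (ys w)) (pmf QY (ys w)) \<ge> ereal (- \<eta>)}"
definition A2 where
  "A2 J n L QZSY \<eta> w = {(xs, ys, ss, z, xh). 
     ereal (1 / real n) * llr (PZgY J n L z (ys w)) (pmf (QZSY (ss w) (ys w)) z) \<ge> ereal (- \<eta>)}"
definition A3 where
  "A3 J n L QXSYZ \<eta> w = {(xs, ys, ss, z, xh). 
     ereal (1 / real n) * llr (PXgYZ J n L (xs w) (ys w) z) (pmf (QXSYZ (ss w) (ys w) z) (xs w))
       \<ge> ereal (- \<eta>)}"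
definition A4 where
  "A4 J n L QXYSZX \<eta> w = {(xs, ys, ss, z, xh). 
     ereal (1 / real n) * llr (PXYgSZ J n L (xs w) (ys w) (ss w) z) (pmf (QXYSZX (ss w) z xh) (xs w, ys w))
       \<ge> ereal (- \<eta>)}"
definition A5 where
  "A5 J n L QYZS Rc \<eta> w = {(xs, ys, ss, z, xh). 
     ereal Rc \<ge> ereal (1 / real n) * llr (pmf (QYZS (ss w)) (ys w, z)) (PYZ J n L (ys w) z) - ereal \<eta>}"
definition A6 where
  "A6 J n L QZ Ri \<eta> w = {(xs, ys, ss, z, xh). 
     ereal Ri \<le> ereal (1 / real n) * llr (PZgS J n L z (ss w)) (pmf QZ z) + ereal \<eta>}"
definition A7 where
  "A7 d D w = {(xs, ys, ss, z, xh).  dist_n d (xs w) xh \<le> D}"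

end

theory Submission
  imports Defs
begin

lemma finite_seqs[simp]: "finite (seqs n :: 'a::finite list set)"
  using finite_lists_length_eq[of "UNIV :: 'a set" n] unfolding seqs_def by simp

lemma seqs_Suc: "seqs (Suc n) = (\<lambda>(a,l). a # l) ` (UNIV \<times> seqs n)"
  unfolding seqs_def by (auto simp: image_iff length_Suc_conv)

lemma sum_seqs_Suc:
  "(\<Sum>l\<in>seqs (Suc n). F l) = (\<Sum>a\<in>(UNIV::'a::finite set). \<Sum>l\<in>seqs n. F (a # l))"
proof -
  have "inj_on (\<lambda>(a,l). a # l) (UNIV \<times> (seqs n :: 'a list set))" by (auto simp: inj_on_def)
  then have "(\<Sum>l\<in>seqs (Suc n). F l) = (\<Sum>p\<in>UNIV \<times> seqs n. F ((\<lambda>(a,l). a # l) p))"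
    unfolding seqs_Suc by (rule sum.reindex[unfolded comp_def])
  also have "\<dots> = (\<Sum>a\<in>UNIV. \<Sum>l\<in>seqs n. F (a # l))"
    by (simp add: sum.cartesian_product split_beta)
  finally show ?thesis .
qed

lemma pn_Cons: "pn P (a # l) = pmf P a * pn P l"
  unfolding pn_def by (simp only: length_Cons prod.lessThan_Suc_shift) simp

lemma chn_Cons: "chn W (a # l) (b # k) = pmf (W a) b * chn W l k"
  unfolding chn_def by (simp only: length_Cons prod.lessThan_Suc_shift) simp

lemma sum_pmf_UNIV: "(\<Sum>a\<in>(UNIV::'a::finite set). pmf P a) = 1"
  by (rule sum_pmf_eq_1) auto

lemma sum_pn: "(\<Sum>x\<in>seqs n. pn (P::'a::finite pmf) x) = 1"
proof (induction n)
  case 0 then show ?case by (simp add: seqs_def pn_def)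
next
  case (Suc n)
  show ?case unfolding sum_seqs_Suc pn_Cons
    by (simp add: sum_distrib_left[symmetric] sum_distrib_right[symmetric] Suc sum_pmf_UNIV)
qed

lemma sum_chn: "length x = n \<Longrightarrow> (\<Sum>y\<in>seqs n. chn (W::'a \<Rightarrow> 'b::finite pmf) x y) = 1"
proof (induction x arbitrary: n)
  case Nil then show ?case by (simp add: seqs_def chn_def)
next
  case (Cons a x)
  then obtain k where n: "n = Suc k" and "length x = k" by auto
  then show ?case unfolding n sum_seqs_Suc chn_Cons
    by (simp add: sum_distrib_left[symmetric] Cons sum_pmf_UNIV)
qed

lemma pmf_sum_le1: "finite A \<Longrightarrow> (\<Sum>a\<in>A. pmf P a) \<le> 1"
  by (metis measure_measure_pmf_finite measure_pmf.subprob_measure_le_1)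

lemma pn_nonneg: "pn P x \<ge> 0" unfolding pn_def by (simp add: prod_nonneg)
lemma chn_nonneg: "chn W x y \<ge> 0" unfolding chn_def by (simp add: prod_nonneg)

lemma sum_PiE_split:
  fixes F :: "'i \<Rightarrow> 'a \<Rightarrow> real"
  assumes "finite I" "w \<in> I" "\<And>m. m \<in> I \<Longrightarrow> finite (S m)"
  shows "(\<Sum>p\<in>PiE I S. (\<Prod>m\<in>I-{w}. F m (p m)) * G (p w))
       = (\<Sum>a\<in>S w. G a) * (\<Prod>m\<in>I-{w}. \<Sum>a\<in>S m. F m a)"
proof -
  define H where "H m a = (if m = w then G a else F m a)" for m a
  have "(\<Prod>m\<in>I. \<Sum>a\<in>S m. H m a) = (\<Sum>p\<in>PiE I S. \<Prod>m\<in>I. H m (p m))"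
    by (rule prod_sum_PiE) (use assms in auto)
  also have "(\<Prod>m\<in>I. \<Sum>a\<in>S m. H m a) = (\<Sum>a\<in>S w. G a) * (\<Prod>m\<in>I-{w}. \<Sum>a\<in>S m. F m a)"
    using assms by (simp add: prod.remove H_def)
  also have "(\<Sum>p\<in>PiE I S. \<Prod>m\<in>I. H m (p m)) = (\<Sum>p\<in>PiE I S. (\<Prod>m\<in>I-{w}. F m (p m)) * G (p w))"
    using assms by (intro sum.cong refl) (simp add: prod.remove H_def mult.commute)
  finally show ?thesis ..
qed

lemma change_measure:
  fixes J :: "'t \<Rightarrow> real" and b :: "'t \<Rightarrow> 'u" and e :: "'t \<Rightarrow> 'v"
    and Q :: "'u \<Rightarrow> 'v pmf" and Wt :: "'u \<Rightarrow> real"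
  assumes fin: "finite T" and Jnn: "\<And>t. t \<in> T \<Longrightarrow> J t \<ge> 0"
    and Wnn: "\<And>u. u \<in> b ` T \<Longrightarrow> Wt u \<ge> 0" and c: "c \<ge> 0"
    and hyp: "\<And>t. t \<in> T \<Longrightarrow> B (b t) (e t) \<Longrightarrow>
       (\<Sum>t'\<in>{t'\<in>T. (b t', e t') = (b t, e t)}. J t') > 0 \<Longrightarrow>
       (\<Sum>t'\<in>{t'\<in>T. (b t', e t') = (b t, e t)}. J t') \<le> c * Wt (b t) * pmf (Q (b t)) (e t)"
  shows "(\<Sum>t\<in>{t\<in>T. B (b t) (e t)}. J t) \<le> c * (\<Sum>u\<in>b ` T. Wt u)"
proof -
  define key where "key t = (b t, e t)" for t
  define K where "K = key ` T"
  define Pa where "Pa k = (\<Sum>t\<in>{t\<in>T. key t = k}. J t)" for k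
  have finK: "finite K" using fin K_def by simp
  have "(\<Sum>t\<in>{t\<in>T. B (b t) (e t)}. J t) = (\<Sum>t\<in>T. if B (b t) (e t) then J t else 0)"
    using fin by (simp add: sum.inter_filter)
  also have "\<dots> = (\<Sum>k\<in>K. \<Sum>t\<in>{t\<in>T. key t = k}. if B (b t) (e t) then J t else 0)"
    unfolding K_def by (rule sum.image_gen[OF fin])
  also have "\<dots> = (\<Sum>k\<in>K. if B (fst k) (snd k) then Pa k else 0)"
    unfolding Pa_def key_def by (intro sum.cong refl) auto
  also have "\<dots> \<le> (\<Sum>k\<in>K. c * Wt (fst k) * pmf (Q (fst k)) (snd k))"
  proof (rule sum_mono)
    fix k assume "k \<in> K"
    then obtain t where t: "t \<in> T" "k = key t" unfolding K_def by auto
    have Panng: "Pa k \<ge> 0" unfolding Pa_def by (rule sum_nonneg) (use Jnn in auto)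
    have rhs: "c * Wt (fst k) * pmf (Q (fst k)) (snd k) \<ge> 0"
      using t Wnn[of "b t"] c by (simp add: key_def)
    show "(if B (fst k) (snd k) then Pa k else 0) \<le> c * Wt (fst k) * pmf (Q (fst k)) (snd k)"
    proof (cases "B (fst k) (snd k) \<and> Pa k > 0")
      case True
      then show ?thesis using hyp[OF t(1)] t by (simp add: Pa_def key_def)
    next
      case False
      then show ?thesis using Panng rhs by auto
    qed
  qed
  also have "\<dots> = (\<Sum>u\<in>fst ` K. \<Sum>k\<in>{k\<in>K. fst k = u}. c * Wt (fst k) * pmf (Q (fst k)) (snd k))"
    by (rule sum.image_gen[OF finK])
  also have "\<dots> = (\<Sum>u\<in>b ` T. c * Wt u * (\<Sum>k\<in>{k\<in>K. fst k = u}. pmf (Q u) (snd k)))"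
  proof -
    have "fst ` K = b ` T" unfolding K_def key_def by (auto simp: image_image)
    then show ?thesis by (auto simp: sum_distrib_left intro!: sum.cong)
  qed
  also have "\<dots> \<le> (\<Sum>u\<in>b ` T. c * Wt u * 1)"
  proof (rule sum_mono)
    fix u assume u: "u \<in> b ` T"
    have "inj_on snd {k\<in>K. fst k = u}" by (auto simp: inj_on_def prod_eq_iff)
    then have "(\<Sum>k\<in>{k\<in>K. fst k = u}. pmf (Q u) (snd k)) = (\<Sum>v\<in>snd ` {k\<in>K. fst k = u}. pmf (Q u) v)"
      by (simp add: sum.reindex)
    also have "\<dots> \<le> 1" by (rule pmf_sum_le1) (use finK in simp)
    finally show "c * Wt u * (\<Sum>k\<in>{k\<in>K. fst k = u}. pmf (Q u) (snd k)) \<le> c * Wt u * 1"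
      using Wnn[OF u] c by (intro mult_left_mono) auto
  qed
  finally show ?thesis by (simp add: sum_distrib_left)
qed

lemma llr_low:
  fixes a b \<eta> :: real and n :: nat
  assumes n: "n > 0" and a: "a > 0" and b: "b \<ge> 0"
    and bad: "\<not> (ereal (1 / real n) * llr a b \<ge> ereal (- \<eta>))"
  shows "a \<le> exp (- real n * \<eta>) * b"
proof (cases "b = 0")
  case True
  then show ?thesis using bad a n by (simp add: llr_def)
next
  case False
  then have bp: "b > 0" using b by simp
  have "ln (a / b) / real n < - \<eta>" using bad a bp by (simp add: llr_def)
  then have "ln (a / b) < - real n * \<eta>" using n by (simp add: divide_less_eq mult.commute)
  then have "a / b < exp (- real n * \<eta>)" using a bp by (metis divide_pos_pos exp_less_cancel_iff exp_ln)
  then show ?thesis using bp by (simp add: divide_less_eq less_imp_le)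
qed

lemma llr_A5:
  fixes a p \<eta> Rc :: real and n L :: nat
  assumes n: "n > 0" and L: "L \<ge> 1" and rate: "ln (real L) / real n \<le> Rc"
    and a: "a \<ge> 0" and p: "p > 0"
    and bad: "\<not> (ereal Rc \<ge> ereal (1 / real n) * llr a p - ereal \<eta>)"
  shows "p \<le> exp (- real n * \<eta>) / real L * a"
proof (cases "a = 0")
  case True
  then show ?thesis using bad n by (simp add: llr_def)
next
  case False
  then have ap: "a > 0" using a by simp
  have "ln (a / p) / real n - \<eta> > Rc" using bad ap p by (simp add: llr_def)
  then have "ln (a / p) / real n > ln (real L) / real n + \<eta>" using rate by linarith
  then have "real n * (ln (real L) / real n + \<eta>) < real n * (ln (a / p) / real n)"
    using n by (intro mult_strict_left_mono) auto
  then have "ln (a / p) > ln (real L) + real n * \<eta>" using n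
    by (simp add: distrib_left)
  then have "exp (ln (a / p)) > exp (ln (real L) + real n * \<eta>)" by simp
  then have "a / p > real L * exp (real n * \<eta>)" using ap p L by (simp add: exp_add)
  then have "a > p * (real L * exp (real n * \<eta>))" using p by (simp add: less_divide_eq mult.commute)
  then have "p * (real L * exp (real n * \<eta>)) \<le> a" by simp
  then show ?thesis using L by (simp add: field_simps exp_minus)
qed

lemma llr_A6:
  fixes r q \<eta> Ri :: real and n M :: nat
  assumes n: "n > 0" and M: "M \<ge> 1" and rate: "ln (real M) / real n \<ge> Ri"
    and r: "r > 0" and q: "q \<ge> 0"
    and bad: "\<not> (ereal Ri \<le> ereal (1 / real n) * llr r q + ereal \<eta>)"
  shows "r \<le> real M * exp (- real n * \<eta>) * q"
proof (cases "q = 0")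
  case True
  then show ?thesis using bad n r by (simp add: llr_def)
next
  case False
  then have qp: "q > 0" using q by simp
  have "ln (r / q) / real n + \<eta> < Ri" using bad r qp by (simp add: llr_def)
  then have "ln (r / q) / real n < ln (real M) / real n - \<eta>" using rate by linarith
  then have "ln (r / q) < ln (real M) - real n * \<eta>" using n
    by (simp add: field_simps)
  then have "exp (ln (r / q)) < exp (ln (real M) - real n * \<eta>)" by simp
  then have "r / q < real M * exp (- real n * \<eta>)" using r qp M by (simp add: exp_diff exp_minus field_simps)
  then show ?thesis using qp by (simp add: divide_less_eq less_imp_le)
qed

lemma L2:
  fixes F :: "'i \<Rightarrow> 'a \<Rightarrow> 'b \<Rightarrow> real" and G :: "'a \<Rightarrow> 'b \<Rightarrow> real"
  assumes I: "finite I" "w \<in> I" and AB: "finite A" "finite B"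
  shows "(\<Sum>xs\<in>PiE I (\<lambda>_. A). \<Sum>ys\<in>PiE I (\<lambda>_. B). (\<Prod>m\<in>I. F m (xs m) (ys m)) * G (xs w) (ys w))
    = (\<Sum>x\<in>A. \<Sum>y\<in>B. F w x y * G x y) * (\<Prod>m\<in>I-{w}. \<Sum>x\<in>A. \<Sum>y\<in>B. F m x y)"
proof -
  have inner: "(\<Sum>ys\<in>PiE I (\<lambda>_. B). (\<Prod>m\<in>I. F m (xs m) (ys m)) * G (xs w) (ys w))
     = (\<Sum>y\<in>B. F w (xs w) y * G (xs w) y) * (\<Prod>m\<in>I-{w}. \<Sum>y\<in>B. F m (xs m) y)" for xs
  proof -
    have "(\<Sum>ys\<in>PiE I (\<lambda>_. B). (\<Prod>m\<in>I. F m (xs m) (ys m)) * G (xs w) (ys w))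
      = (\<Sum>ys\<in>PiE I (\<lambda>_. B). (\<Prod>m\<in>I-{w}. F m (xs m) (ys m)) * (F w (xs w) (ys w) * G (xs w) (ys w)))"
      using I by (intro sum.cong refl) (simp add: prod.remove mult_ac)
    also have "\<dots> = (\<Sum>y\<in>B. F w (xs w) y * G (xs w) y) * (\<Prod>m\<in>I-{w}. \<Sum>y\<in>B. F m (xs m) y)"
      by (rule sum_PiE_split[where F="\<lambda>m y. F m (xs m) y" and G="\<lambda>y. F w (xs w) y * G (xs w) y" and S="\<lambda>_. B"])
        (use I AB in auto)
    finally show ?thesis .
  qed
  have "(\<Sum>xs\<in>PiE I (\<lambda>_. A). \<Sum>ys\<in>PiE I (\<lambda>_. B). (\<Prod>m\<in>I. F m (xs m) (ys m)) * G (xs w) (ys w))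
    = (\<Sum>xs\<in>PiE I (\<lambda>_. A). (\<Prod>m\<in>I-{w}. \<Sum>y\<in>B. F m (xs m) y) * (\<Sum>y\<in>B. F w (xs w) y * G (xs w) y))"
    unfolding inner by (intro sum.cong refl) (rule mult.commute)
  also have "\<dots> = (\<Sum>x\<in>A. \<Sum>y\<in>B. F w x y * G x y) * (\<Prod>m\<in>I-{w}. \<Sum>x\<in>A. \<Sum>y\<in>B. F m x y)"
    by (rule sum_PiE_split[where F="\<lambda>m x. \<Sum>y\<in>B. F m x y" and G="\<lambda>x. \<Sum>y\<in>B. F w x y * G x y" and S="\<lambda>_. A"])
      (use I AB in auto)
  finally show ?thesis .
qed

lemma L3:
  fixes F :: "'a \<Rightarrow> 'b \<Rightarrow> 'c \<Rightarrow> real" and G :: "'a \<Rightarrow> 'b \<Rightarrow> 'c \<Rightarrow> real"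
  assumes I: "finite I" "w \<in> I" and ABC: "finite A" "finite B" "finite C"
  shows "(\<Sum>xs\<in>PiE I (\<lambda>_. A). \<Sum>ys\<in>PiE I (\<lambda>_. B). \<Sum>ss\<in>PiE I (\<lambda>_. C).
      (\<Prod>m\<in>I. F (xs m) (ys m) (ss m)) * G (xs w) (ys w) (ss w))
    = (\<Sum>x\<in>A. \<Sum>y\<in>B. \<Sum>s\<in>C. F x y s * G x y s) * (\<Prod>m\<in>I-{w}. \<Sum>x\<in>A. \<Sum>y\<in>B. \<Sum>s\<in>C. F x y s)"
proof -
  have inner: "(\<Sum>ss\<in>PiE I (\<lambda>_. C). (\<Prod>m\<in>I. F (xs m) (ys m) (ss m)) * G (xs w) (ys w) (ss w))
     = (\<Prod>m\<in>I. (if m = w then 1 else \<Sum>s\<in>C. F (xs m) (ys m) s)) * (\<Sum>s\<in>C. F (xs w) (ys w) s * G (xs w) (ys w) s)" for xs ys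
  proof -
    have "(\<Sum>ss\<in>PiE I (\<lambda>_. C). (\<Prod>m\<in>I. F (xs m) (ys m) (ss m)) * G (xs w) (ys w) (ss w))
      = (\<Sum>ss\<in>PiE I (\<lambda>_. C). (\<Prod>m\<in>I-{w}. F (xs m) (ys m) (ss m)) * (F (xs w) (ys w) (ss w) * G (xs w) (ys w) (ss w)))"
      using I by (intro sum.cong refl) (simp add: prod.remove mult_ac)
    also have "\<dots> = (\<Sum>s\<in>C. F (xs w) (ys w) s * G (xs w) (ys w) s) * (\<Prod>m\<in>I-{w}. \<Sum>s\<in>C. F (xs m) (ys m) s)"
      by (rule sum_PiE_split[where F="\<lambda>m s. F (xs m) (ys m) s" and G="\<lambda>s. F (xs w) (ys w) s * G (xs w) (ys w) s" and S="\<lambda>_. C"])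
        (use I ABC in auto)
    also have "(\<Prod>m\<in>I-{w}. \<Sum>s\<in>C. F (xs m) (ys m) s) = (\<Prod>m\<in>I. (if m = w then 1 else \<Sum>s\<in>C. F (xs m) (ys m) s))"
      using I by (simp add: prod.remove)
    finally show ?thesis by (simp add: mult.commute)
  qed
  have "(\<Sum>xs\<in>PiE I (\<lambda>_. A). \<Sum>ys\<in>PiE I (\<lambda>_. B). \<Sum>ss\<in>PiE I (\<lambda>_. C).
      (\<Prod>m\<in>I. F (xs m) (ys m) (ss m)) * G (xs w) (ys w) (ss w))
    = (\<Sum>xs\<in>PiE I (\<lambda>_. A). \<Sum>ys\<in>PiE I (\<lambda>_. B).
      (\<Prod>m\<in>I. (if m = w then 1 else \<Sum>s\<in>C. F (xs m) (ys m) s)) * (\<Sum>s\<in>C. F (xs w) (ys w) s * G (xs w) (ys w) s))"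
    by (simp only: inner)
  also have "\<dots> = (\<Sum>x\<in>A. \<Sum>y\<in>B. (if w = w then 1 else \<Sum>s\<in>C. F x y s) * (\<Sum>s\<in>C. F x y s * G x y s))
     * (\<Prod>m\<in>I-{w}. \<Sum>x\<in>A. \<Sum>y\<in>B. (if m = w then 1 else \<Sum>s\<in>C. F x y s))"
    by (rule L2[where F="\<lambda>m x y. if m = w then 1 else \<Sum>s\<in>C. F x y s" and G="\<lambda>x y. \<Sum>s\<in>C. F x y s * G x y s"])
      (use I ABC in auto)
  also have "\<dots> = (\<Sum>x\<in>A. \<Sum>y\<in>B. \<Sum>s\<in>C. F x y s * G x y s) * (\<Prod>m\<in>I-{w}. \<Sum>x\<in>A. \<Sum>y\<in>B. \<Sum>s\<in>C. F x y s)"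
    by (intro arg_cong2[where f="(*)"] prod.cong refl) auto
  finally show ?thesis .
qed

lemma mult_if0: "(c::real) * (if P then a else 0) = (if P then c * a else 0)" by simp
lemma mult_if0': "(if P then a else 0) * (c::real) = (if P then a * c else 0)" by simp
lemma div_if0: "(if P then a else 0) / (c::real) = (if P then a / c else 0)" by simp

lemma sum_if_const: "(\<Sum>b\<in>B. if P then f b else (0::real)) = (if P then sum f B else 0)"
  by simp

lemma mult_ind: "(x::real) * (if P then 1 else 0) = (if P then x else 0)" by simp

lemma sum_unit_le: "(\<Sum>u\<in>(A::unit set). (1::real)) \<le> 1"
proof -
  have "A \<subseteq> {()}" by auto
  then have "card A \<le> card {()}" by (intro card_mono) auto
  then show ?thesis by simp
qed

lemma sum_Times: "(\<Sum>p\<in>A \<times> B. g p) = (\<Sum>a\<in>A. \<Sum>b\<in>B. g (a, b))"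
  by (simp add: sum.cartesian_product)

lemma sum_delta_1: "c \<in> A \<Longrightarrow> finite A \<Longrightarrow> (\<Sum>a\<in>A. (if a = c then (1::real) else 0)) = 1"
  by simp

lemma PWT_nonneg: "PWT M PX PYX PZX f h p \<ge> 0"
proof -
  obtain w xs ys ss z xh where p: "p = (w, xs, ys, ss, z, xh)" by (cases p)
  have "0 \<le> (\<Prod>m\<in>{1..M}. pn PX (xs m) * chn PYX (xs m) (ys m) * (if ss m = f (ys m) then 1 else (0::real)))"
    by (rule prod_nonneg) (simp add: pn_nonneg chn_nonneg)
  then show ?thesis unfolding p PWT_def by (simp add: chn_nonneg)
qed

lemma PrWT_union:
  fixes E :: "(nat \<times> ('x::finite, 'y::finite, 'z::finite, 'xh::finite) tup) set"
  assumes "E \<subseteq> E1 \<union> E2"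
  shows "PrWT n M L PX PYX PZX f h E \<le> PrWT n M L PX PYX PZX f h E1 + PrWT n M L PX PYX PZX f h E2"
proof -
  have fin: "finite (TW n M L :: (nat \<times> ('x::finite, 'y::finite, 'z::finite, 'xh::finite) tup) set)"
    unfolding TW_def by (intro finite_cartesian_product finite_PiE) auto
  have "PrWT n M L PX PYX PZX f h E = (\<Sum>p\<in>TW n M L. if p \<in> E then PWT M PX PYX PZX f h p else 0)"
    unfolding PrWT_def using fin by (simp add: sum.inter_restrict)
  also have "\<dots> \<le> (\<Sum>p\<in>TW n M L. (if p \<in> E1 then PWT M PX PYX PZX f h p else 0) + (if p \<in> E2 then PWT M PX PYX PZX f h p else 0))"
    by (rule sum_mono) (use assms PWT_nonneg[of M PX PYX PZX f h] in auto)
  also have "\<dots> = PrWT n M L PX PYX PZX f h E1 + PrWT n M L PX PYX PZX f h E2"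
    unfolding PrWT_def using fin by (simp add: sum.inter_restrict sum.distrib)
  finally show ?thesis .
qed

type_synonym ('x, 'y, 'z, 'xh) t5 = "'x list \<times> 'y list \<times> nat \<times> 'z list \<times> 'xh list"

lemma sum_delta_mult[simp]: "finite A \<Longrightarrow> (\<Sum>a\<in>A. c * (if a = d then 1 else 0)) = (if d \<in> A then (c::real) else 0)"
  by (simp add: sum_distrib_left[symmetric])

context
  fixes n M L :: nat and PX :: "'x::finite pmf" and PYX :: "'x \<Rightarrow> 'y::finite pmf"
    and PZX :: "'x \<Rightarrow> 'z::finite pmf"
    and f :: "'y list \<Rightarrow> nat" and h :: "nat \<Rightarrow> 'z list \<Rightarrow> 'xh::finite list"
  assumes n_pos: "n > 0" and M_pos: "M \<ge> 1" and L_pos: "L \<ge> 1"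
    and f_range: "\<And>ys. length ys = n \<Longrightarrow> f ys \<in> {1..L}"
    and h_len: "\<And>s z. s \<in> {1..L} \<Longrightarrow> length z = n \<Longrightarrow> length (h s z) = n"
begin

lemma h_in: "s \<in> {1..L} \<Longrightarrow> z \<in> seqs n \<Longrightarrow> h s z \<in> seqs n"
  using h_len by (simp add: seqs_def)

lemma f_in: "y \<in> seqs n \<Longrightarrow> f y \<in> {1..L}"
  using f_range by (simp add: seqs_def)

lemma f_in': "y \<in> seqs n \<Longrightarrow> Suc 0 \<le> f y \<and> f y \<le> L"
  using f_in by auto

abbreviation "JJ \<equiv> joint1 PX PYX PZX f h"

lemma J_nonneg: "JJ t \<ge> 0"
  by (cases t) (auto simp: joint1_def pn_nonneg chn_nonneg)

lemma J_nz: "JJ (x, y, s, z, xh) \<noteq> 0 \<Longrightarrow> s = f y \<and> xh = h s z"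
  by (auto simp: joint1_def split: if_splits)

lemma finite_T1[simp]: "finite (T1 n L :: ('x list \<times> 'y list \<times> nat \<times> 'z list \<times> 'xh list) set)"
  by (simp add: T1_def)

lemma Pm_cong:
  assumes "\<And>t. t \<in> T1 n L \<Longrightarrow> JJ t \<noteq> 0 \<Longrightarrow> E t = E' t"
  shows "Pm JJ n L E = Pm JJ n L E'"
proof -
  have "Pm JJ n L E = (\<Sum>t\<in>T1 n L. if E t then JJ t else 0)"
    unfolding Pm_def by (simp add: sum.inter_filter)
  also have "\<dots> = (\<Sum>t\<in>T1 n L. if E' t then JJ t else 0)"
  proof (intro sum.cong refl)
    fix t :: "('x, 'y, 'z, 'xh) t5" assume "t \<in> T1 n L"
    then show "(if E t then JJ t else 0) = (if E' t then JJ t else 0)"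
      using assms[of t] by (cases "JJ t = 0") auto
  qed
  also have "\<dots> = Pm JJ n L E'"
    unfolding Pm_def by (simp add: sum.inter_filter)
  finally show ?thesis .
qed

lemma Pm_nonneg: "Pm JJ n L E \<ge> 0"
  unfolding Pm_def by (rule sum_nonneg) (simp add: J_nonneg)

lemma Pm_mono: "(\<And>t. E t \<Longrightarrow> E' t) \<Longrightarrow> Pm JJ n L E \<le> Pm JJ n L E'"
  unfolding Pm_def by (rule sum_mono2) (auto simp: J_nonneg)

lemma sum_J: "(\<Sum>t\<in>T1 n L. JJ t) = 1"
proof -
  have hz: "(\<Sum>xh\<in>seqs n. (if xh = h s z then 1 else 0)) = (1::real)"
    if "s \<in> {1..L}" "z \<in> seqs n" for s z
    using that h_len by (intro sum_delta_1[OF _ finite_seqs]) (auto simp: seqs_def)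
  have fy: "(\<Sum>s\<in>{1..L}. (if s = f y then 1 else 0)) = (1::real)" if "y \<in> seqs n" for y
    using that f_range by (intro sum_delta_1) (auto simp: seqs_def)
  have "(\<Sum>t\<in>T1 n L. JJ t) = (\<Sum>x\<in>seqs n. \<Sum>y\<in>seqs n. \<Sum>s\<in>{1..L}. \<Sum>z\<in>seqs n. \<Sum>xh\<in>seqs n.
      pn PX x * chn PYX x y * (if s = f y then 1 else 0) * chn PZX x z * (if xh = h s z then 1 else 0))"
    by (simp only: T1_def sum_Times joint1_def prod.case)
  also have "\<dots> = (\<Sum>x\<in>seqs n. \<Sum>y\<in>seqs n. \<Sum>s\<in>{1..L}. \<Sum>z\<in>seqs n.
      pn PX x * chn PYX x y * (if s = f y then 1 else 0) * chn PZX x z)"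
    by (intro sum.cong refl) (simp add: h_in f_in' f_in)
  also have "\<dots> = (\<Sum>x\<in>seqs n. \<Sum>y\<in>seqs n. \<Sum>s\<in>{1..L}.
      pn PX x * chn PYX x y * (if s = f y then 1 else 0))"
    by (intro sum.cong refl) (simp add: sum_distrib_left[symmetric] sum_chn[unfolded seqs_def] seqs_def)
  also have "\<dots> = (\<Sum>x\<in>seqs n. \<Sum>y\<in>seqs n. pn PX x * chn PYX x y)"
    by (intro sum.cong refl) (simp add: f_in')
  also have "\<dots> = 1"
    by (simp add: sum_distrib_left[symmetric] sum_chn[unfolded seqs_def] seqs_def sum_pn[unfolded seqs_def])
  finally show ?thesis .
qed

lemma cm_Pm:
  fixes b :: "('x, 'y, 'z, 'xh) t5 \<Rightarrow> 'u" and e :: "('x, 'y, 'z, 'xh) t5 \<Rightarrow> 'v"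
  assumes Wnn: "\<And>u. u \<in> b ` T1 n L \<Longrightarrow> Wt u \<ge> 0" and c: "c \<ge> 0"
    and hyp: "\<And>t. t \<in> T1 n L \<Longrightarrow> B (b t) (e t) \<Longrightarrow>
       Pm JJ n L (\<lambda>t'. (b t', e t') = (b t, e t)) > 0 \<Longrightarrow>
       Pm JJ n L (\<lambda>t'. (b t', e t') = (b t, e t)) \<le> c * Wt (b t) * pmf (Q (b t)) (e t)"
  shows "Pm JJ n L (\<lambda>t. B (b t) (e t)) \<le> c * (\<Sum>u\<in>b ` T1 n L. Wt u)"
  unfolding Pm_def
  apply (rule change_measure[OF finite_T1 J_nonneg Wnn c, where B=B and b=b and e=e and Q=Q])
  using hyp unfolding Pm_def by auto

lemma cm_cond:
  fixes b :: "('x, 'y, 'z, 'xh) t5 \<Rightarrow> 'u" and e :: "('x, 'y, 'z, 'xh) t5 \<Rightarrow> 'v"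
  assumes c: "c \<ge> 0"
    and hyp: "\<And>t. t \<in> T1 n L \<Longrightarrow> B (b t) (e t) \<Longrightarrow>
       Pm JJ n L (\<lambda>t'. (b t', e t') = (b t, e t)) > 0 \<Longrightarrow>
       Pm JJ n L (\<lambda>t'. (b t', e t') = (b t, e t)) / Pm JJ n L (\<lambda>t'. b t' = b t)
         \<le> c * pmf (Q (b t)) (e t)"
  shows "Pm JJ n L (\<lambda>t. B (b t) (e t)) \<le> c"
proof -
  have "Pm JJ n L (\<lambda>t. B (b t) (e t)) \<le> c * (\<Sum>u\<in>b ` T1 n L. Pm JJ n L (\<lambda>t'. b t' = u))"
  proof (rule cm_Pm[where B=B and b=b and e=e and Q=Q and Wt="\<lambda>u. Pm JJ n L (\<lambda>t'. b t' = u)", OF Pm_nonneg c])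
    fix t :: "('x, 'y, 'z, 'xh) t5" assume t: "t \<in> T1 n L" and B: "B (b t) (e t)"
      and pos: "Pm JJ n L (\<lambda>t'. (b t', e t') = (b t, e t)) > 0"
    have le: "Pm JJ n L (\<lambda>t'. (b t', e t') = (b t, e t)) \<le> Pm JJ n L (\<lambda>t'. b t' = b t)"
      by (rule Pm_mono) auto
    then have pb: "Pm JJ n L (\<lambda>t'. b t' = b t) > 0" using pos by linarith
    show "Pm JJ n L (\<lambda>t'. (b t', e t') = (b t, e t)) \<le> c * Pm JJ n L (\<lambda>t'. b t' = b t) * pmf (Q (b t)) (e t)"
      using hyp[OF t B pos] pb by (simp add: divide_le_eq mult_ac)
  qed
  also have "(\<Sum>u\<in>b ` T1 n L. Pm JJ n L (\<lambda>t'. b t' = u)) = 1"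
    unfolding Pm_def using sum.image_gen[OF finite_T1, of JJ b, symmetric] sum_J by simp
  finally show ?thesis by simp
qed

lemma bound1:
  assumes eta: "\<eta> > 0"
  shows "Pm JJ n L (\<lambda>(x, y, s, z, xh). \<not> (ereal (1 / real n) * llr (PY JJ n L y) (pmf QY y) \<ge> ereal (- \<eta>)))
    \<le> exp (- real n * \<eta>)"
proof -
  define B where "B = (\<lambda>(u::unit) v. \<not> (ereal (1 / real n) * llr (PY JJ n L v) (pmf QY v) \<ge> ereal (- \<eta>)))"
  define b where "b = (\<lambda>_::('x, 'y, 'z, 'xh) t5. ())"
  define e where "e = (\<lambda>(x::'x list, y::'y list, s::nat, z::'z list, xh::'xh list). y)"
  have "Pm JJ n L (\<lambda>t. B (b t) (e t)) \<le> exp (- real n * \<eta>) * (\<Sum>u\<in>b ` T1 n L. 1)"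
  proof (rule cm_Pm[where B=B and b=b and e=e and Q="\<lambda>_. QY" and Wt="\<lambda>_. 1"])
    show "\<And>u. u \<in> b ` T1 n L \<Longrightarrow> 0 \<le> (1::real)" by simp
    show "0 \<le> exp (- real n * \<eta>)" by simp
    fix t :: "('x, 'y, 'z, 'xh) t5"
    assume t: "t \<in> T1 n L" and bad: "B (b t) (e t)"
      and pos: "Pm JJ n L (\<lambda>t'. (b t', e t') = (b t, e t)) > 0"
    obtain x y s z xh where tt: "t = (x, y, s, z, xh)" by (cases t)
    have et: "e t = y" unfolding e_def tt by simp
    have eq: "Pm JJ n L (\<lambda>t'. (b t', e t') = (b t, y)) = PY JJ n L y"
      unfolding PY_def by (rule Pm_cong) (auto simp: b_def e_def)
    have pos': "PY JJ n L y > 0" using pos unfolding et eq .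
    have bad': "\<not> (ereal (1 / real n) * llr (PY JJ n L y) (pmf QY y) \<ge> ereal (- \<eta>))"
      using bad unfolding B_def et by simp
    show "Pm JJ n L (\<lambda>t'. (b t', e t') = (b t, e t)) \<le> exp (- real n * \<eta>) * 1 * pmf (QY) (e t)"
      unfolding et eq using llr_low[OF n_pos pos' pmf_nonneg bad'] by simp
  qed
  also have "(\<Sum>u\<in>b ` T1 n L. 1::real) \<le> 1"
    by (rule sum_unit_le)
  finally have "Pm JJ n L (\<lambda>t. B (b t) (e t)) \<le> exp (- real n * \<eta>)" by simp
  moreover have "(\<lambda>t. B (b t) (e t)) = (\<lambda>(x, y, s, z, xh). \<not> (ereal (1 / real n) * llr (PY JJ n L y) (pmf QY y) \<ge> ereal (- \<eta>)))"
    unfolding B_def b_def e_def by (rule ext) (simp add: split_beta)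
  ultimately show ?thesis by simp
qed

lemma Pm_cong5:
  assumes "\<And>x y s z xh. (x, y, s, z, xh) \<in> T1 n L \<Longrightarrow> JJ (x, y, s, z, xh) \<noteq> 0
      \<Longrightarrow> E (x, y, s, z, xh) = E' (x, y, s, z, xh)"
  shows "Pm JJ n L E = Pm JJ n L E'"
  apply (rule Pm_cong)
  subgoal for t by (cases t) (use assms in blast)
  done

lemma Pm_False: "Pm JJ n L (\<lambda>_. False) = 0"
  unfolding Pm_def by simp

lemma bound2:
  shows "Pm JJ n L (\<lambda>(x, y, s, z, xh). \<not> (ereal (1 / real n) * llr (PZgY JJ n L z y) (pmf (QZSY s y) z) \<ge> ereal (- \<eta>)))
    \<le> exp (- real n * \<eta>)"
proof -
  define B where "B = (\<lambda>(y::'y list, s::nat) (z::'z list). \<not> (ereal (1 / real n) * llr (PZgY JJ n L z y) (pmf (QZSY s y) z) \<ge> ereal (- \<eta>)))"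
  define b where "b = (\<lambda>(x::'x list, y::'y list, s::nat, z::'z list, xh::'xh list). (y, s))"
  define e where "e = (\<lambda>(x::'x list, y::'y list, s::nat, z::'z list, xh::'xh list). z)"
  have "Pm JJ n L (\<lambda>t. B (b t) (e t)) \<le> exp (- real n * \<eta>)"
  proof (rule cm_cond[where B=B and b=b and e=e and Q="\<lambda>(y, s). QZSY s y"])
    show "0 \<le> exp (- real n * \<eta>)" by simp
    fix t :: "('x, 'y, 'z, 'xh) t5"
    assume t: "t \<in> T1 n L" and bad: "B (b t) (e t)"
      and pos: "Pm JJ n L (\<lambda>t'. (b t', e t') = (b t, e t)) > 0"
    obtain x y s z xh where tt: "t = (x, y, s, z, xh)" by (cases t)
    have bt: "b t = (y, s)" and et: "e t = z" unfolding b_def e_def tt by simp_all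
    have pos1: "Pm JJ n L (\<lambda>t'. (b t', e t') = ((y, s), z)) > 0" using pos unfolding bt et .
    have sfy: "s = f y"
    proof (rule ccontr)
      assume "s \<noteq> f y"
      then have "Pm JJ n L (\<lambda>t'. (b t', e t') = ((y, s), z)) = Pm JJ n L (\<lambda>_. False)"
        by (intro Pm_cong5) (auto simp: b_def e_def dest!: J_nz)
      then show False using pos1 Pm_False by simp
    qed
    have eqa: "Pm JJ n L (\<lambda>t'. (b t', e t') = ((y, s), z)) = PYZ JJ n L y z"
      unfolding PYZ_def by (intro Pm_cong5) (auto simp: b_def e_def sfy dest!: J_nz)
    have eqb: "Pm JJ n L (\<lambda>t'. b t' = (y, s)) = PY JJ n L y"
      unfolding PY_def by (intro Pm_cong5) (auto simp: b_def sfy dest!: J_nz)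
    have le: "PYZ JJ n L y z \<le> PY JJ n L y"
      unfolding PYZ_def PY_def by (rule Pm_mono) auto
    have p1: "PYZ JJ n L y z > 0" using pos1 eqa by simp
    then have rp: "PZgY JJ n L z y > 0" using le unfolding PZgY_def by simp
    have bad': "\<not> (ereal (1 / real n) * llr (PZgY JJ n L z y) (pmf (QZSY s y) z) \<ge> ereal (- \<eta>))"
      using bad unfolding B_def bt et by simp
    show "Pm JJ n L (\<lambda>t'. (b t', e t') = (b t, e t)) / Pm JJ n L (\<lambda>t'. b t' = b t)
        \<le> exp (- real n * \<eta>) * pmf ((\<lambda>(y, s). QZSY s y) (b t)) (e t)"
      unfolding bt et eqa eqb using llr_low[OF n_pos rp pmf_nonneg bad'] by (simp add: PZgY_def)
  qed
  moreover have "(\<lambda>t. B (b t) (e t)) = (\<lambda>(x, y, s, z, xh). \<not> (ereal (1 / real n) * llr (PZgY JJ n L z y) (pmf (QZSY s y) z) \<ge> ereal (- \<eta>)))"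
    unfolding B_def b_def e_def by (rule ext) (simp add: split_beta)
  ultimately show ?thesis by simp
qed

lemma bound3:
  shows "Pm JJ n L (\<lambda>(x, y, s, z, xh). \<not> (ereal (1 / real n) * llr (PXgYZ JJ n L x y z) (pmf (QXSYZ s y z) x) \<ge> ereal (- \<eta>)))
    \<le> exp (- real n * \<eta>)"
proof -
  define B where "B = (\<lambda>(s::nat, y::'y list, z::'z list) (x::'x list). \<not> (ereal (1 / real n) * llr (PXgYZ JJ n L x y z) (pmf (QXSYZ s y z) x) \<ge> ereal (- \<eta>)))"
  define b where "b = (\<lambda>(x::'x list, y::'y list, s::nat, z::'z list, xh::'xh list). (s, y, z))"
  define e where "e = (\<lambda>(x::'x list, y::'y list, s::nat, z::'z list, xh::'xh list). x)"
  have "Pm JJ n L (\<lambda>t. B (b t) (e t)) \<le> exp (- real n * \<eta>)"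
  proof (rule cm_cond[where B=B and b=b and e=e and Q="\<lambda>(s, y, z). QXSYZ s y z"])
    show "0 \<le> exp (- real n * \<eta>)" by simp
    fix t :: "('x, 'y, 'z, 'xh) t5"
    assume t: "t \<in> T1 n L" and bad: "B (b t) (e t)"
      and pos: "Pm JJ n L (\<lambda>t'. (b t', e t') = (b t, e t)) > 0"
    obtain x y s z xh where tt: "t = (x, y, s, z, xh)" by (cases t)
    have bt: "b t = (s, y, z)" and et: "e t = x" unfolding b_def e_def tt by simp_all
    have pos1: "Pm JJ n L (\<lambda>t'. (b t', e t') = ((s, y, z), x)) > 0" using pos unfolding bt et .
    have sfy: "s = f y"
    proof (rule ccontr)
      assume "s \<noteq> f y"
      then have "Pm JJ n L (\<lambda>t'. (b t', e t') = ((s, y, z), x)) = Pm JJ n L (\<lambda>_. False)"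
        by (intro Pm_cong5) (auto simp: b_def e_def dest!: J_nz)
      then show False using pos1 Pm_False by simp
    qed
    have eqa: "Pm JJ n L (\<lambda>t'. (b t', e t') = ((s, y, z), x)) = Pm JJ n L (\<lambda>(x', y', s', z', xh'). x' = x \<and> y' = y \<and> z' = z)"
      by (intro Pm_cong5) (auto simp: b_def e_def sfy dest!: J_nz)
    have eqb: "Pm JJ n L (\<lambda>t'. b t' = (s, y, z)) = PYZ JJ n L y z"
      unfolding PYZ_def by (intro Pm_cong5) (auto simp: b_def sfy dest!: J_nz)
    have le: "Pm JJ n L (\<lambda>(x', y', s', z', xh'). x' = x \<and> y' = y \<and> z' = z) \<le> PYZ JJ n L y z"
      unfolding PYZ_def by (rule Pm_mono) auto
    have p1: "Pm JJ n L (\<lambda>(x', y', s', z', xh'). x' = x \<and> y' = y \<and> z' = z) > 0" using pos1 eqa by simp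
    then have rp: "PXgYZ JJ n L x y z > 0" using le unfolding PXgYZ_def by simp
    have bad': "\<not> (ereal (1 / real n) * llr (PXgYZ JJ n L x y z) (pmf (QXSYZ s y z) x) \<ge> ereal (- \<eta>))"
      using bad unfolding B_def bt et by simp
    show "Pm JJ n L (\<lambda>t'. (b t', e t') = (b t, e t)) / Pm JJ n L (\<lambda>t'. b t' = b t)
        \<le> exp (- real n * \<eta>) * pmf ((\<lambda>(s, y, z). QXSYZ s y z) (b t)) (e t)"
      unfolding bt et eqa eqb using llr_low[OF n_pos rp pmf_nonneg bad'] by (simp add: PXgYZ_def)
  qed
  moreover have "(\<lambda>t. B (b t) (e t)) = (\<lambda>(x, y, s, z, xh). \<not> (ereal (1 / real n) * llr (PXgYZ JJ n L x y z) (pmf (QXSYZ s y z) x) \<ge> ereal (- \<eta>)))"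
    unfolding B_def b_def e_def by (rule ext) (simp add: split_beta)
  ultimately show ?thesis by simp
qed

lemma bound4:
  shows "Pm JJ n L (\<lambda>(x, y, s, z, xh). \<not> (ereal (1 / real n) * llr (PXYgSZ JJ n L x y s z) (pmf (QXYSZX s z xh) (x, y)) \<ge> ereal (- \<eta>)))
    \<le> exp (- real n * \<eta>)"
proof -
  define B where "B = (\<lambda>(s::nat, z::'z list, xh::'xh list) (x::'x list, y::'y list). \<not> (ereal (1 / real n) * llr (PXYgSZ JJ n L x y s z) (pmf (QXYSZX s z xh) (x, y)) \<ge> ereal (- \<eta>)))"
  define b where "b = (\<lambda>(x::'x list, y::'y list, s::nat, z::'z list, xh::'xh list). (s, z, xh))"
  define e where "e = (\<lambda>(x::'x list, y::'y list, s::nat, z::'z list, xh::'xh list). (x, y))"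
  have "Pm JJ n L (\<lambda>t. B (b t) (e t)) \<le> exp (- real n * \<eta>)"
  proof (rule cm_cond[where B=B and b=b and e=e and Q="\<lambda>(s, z, xh). QXYSZX s z xh"])
    show "0 \<le> exp (- real n * \<eta>)" by simp
    fix t :: "('x, 'y, 'z, 'xh) t5"
    assume t: "t \<in> T1 n L" and bad: "B (b t) (e t)"
      and pos: "Pm JJ n L (\<lambda>t'. (b t', e t') = (b t, e t)) > 0"
    obtain x y s z xh where tt: "t = (x, y, s, z, xh)" by (cases t)
    have bt: "b t = (s, z, xh)" and et: "e t = (x, y)" unfolding b_def e_def tt by simp_all
    have pos1: "Pm JJ n L (\<lambda>t'. (b t', e t') = ((s, z, xh), (x, y))) > 0" using pos unfolding bt et .
    have hsz: "xh = h s z"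
    proof (rule ccontr)
      assume "xh \<noteq> h s z"
      then have "Pm JJ n L (\<lambda>t'. (b t', e t') = ((s, z, xh), (x, y))) = Pm JJ n L (\<lambda>_. False)"
        by (intro Pm_cong5) (auto simp: b_def e_def dest!: J_nz)
      then show False using pos1 Pm_False by simp
    qed
    have eqa: "Pm JJ n L (\<lambda>t'. (b t', e t') = ((s, z, xh), (x, y))) = Pm JJ n L (\<lambda>(x', y', s', z', xh'). x' = x \<and> y' = y \<and> s' = s \<and> z' = z)"
      by (intro Pm_cong5) (auto simp: b_def e_def hsz dest!: J_nz)
    have eqb: "Pm JJ n L (\<lambda>t'. b t' = (s, z, xh)) = PSZ JJ n L s z"
      unfolding PSZ_def by (intro Pm_cong5) (auto simp: b_def hsz dest!: J_nz)
    have le: "Pm JJ n L (\<lambda>(x', y', s', z', xh'). x' = x \<and> y' = y \<and> s' = s \<and> z' = z) \<le> PSZ JJ n L s z"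
      unfolding PSZ_def by (rule Pm_mono) auto
    have p1: "Pm JJ n L (\<lambda>(x', y', s', z', xh'). x' = x \<and> y' = y \<and> s' = s \<and> z' = z) > 0" using pos1 eqa by simp
    then have rp: "PXYgSZ JJ n L x y s z > 0" using le unfolding PXYgSZ_def by simp
    have bad': "\<not> (ereal (1 / real n) * llr (PXYgSZ JJ n L x y s z) (pmf (QXYSZX s z xh) (x, y)) \<ge> ereal (- \<eta>))"
      using bad unfolding B_def bt et by simp
    show "Pm JJ n L (\<lambda>t'. (b t', e t') = (b t, e t)) / Pm JJ n L (\<lambda>t'. b t' = b t)
        \<le> exp (- real n * \<eta>) * pmf ((\<lambda>(s, z, xh). QXYSZX s z xh) (b t)) (e t)"
      unfolding bt et eqa eqb using llr_low[OF n_pos rp pmf_nonneg bad'] by (simp add: PXYgSZ_def)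
  qed
  moreover have "(\<lambda>t. B (b t) (e t)) = (\<lambda>(x, y, s, z, xh). \<not> (ereal (1 / real n) * llr (PXYgSZ JJ n L x y s z) (pmf (QXYSZX s z xh) (x, y)) \<ge> ereal (- \<eta>)))"
    unfolding B_def b_def e_def by (rule ext) (simp add: split_beta)
  ultimately show ?thesis by simp
qed

lemma bound5:
  assumes rate: "ln (real L) / real n \<le> Rc"
  shows "Pm JJ n L (\<lambda>(x, y, s, z, xh). \<not> (ereal Rc \<ge> ereal (1 / real n) * llr (pmf (QYZS s) (y, z)) (PYZ JJ n L y z) - ereal \<eta>))
    \<le> exp (- real n * \<eta>)"
proof -
  define B where "B = (\<lambda>(s::nat) (y::'y list, z::'z list). \<not> (ereal Rc \<ge> ereal (1 / real n) * llr (pmf (QYZS s) (y, z)) (PYZ JJ n L y z) - ereal \<eta>))"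
  define b where "b = (\<lambda>(x::'x list, y::'y list, s::nat, z::'z list, xh::'xh list). s)"
  define e where "e = (\<lambda>(x::'x list, y::'y list, s::nat, z::'z list, xh::'xh list). (y, z))"
  have "Pm JJ n L (\<lambda>t. B (b t) (e t)) \<le> exp (- real n * \<eta>) / real L * (\<Sum>u\<in>b ` T1 n L. 1)"
  proof (rule cm_Pm[where B=B and b=b and e=e and Q=QYZS and Wt="\<lambda>_. 1"])
    show "\<And>u. u \<in> b ` T1 n L \<Longrightarrow> 0 \<le> (1::real)" by simp
    show "0 \<le> exp (- real n * \<eta>) / real L" by simp
    fix t :: "('x, 'y, 'z, 'xh) t5"
    assume t: "t \<in> T1 n L" and bad: "B (b t) (e t)"
      and pos: "Pm JJ n L (\<lambda>t'. (b t', e t') = (b t, e t)) > 0"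
    obtain x y s z xh where tt: "t = (x, y, s, z, xh)" by (cases t)
    have bt: "b t = s" and et: "e t = (y, z)" unfolding b_def e_def tt by simp_all
    have pos1: "Pm JJ n L (\<lambda>t'. (b t', e t') = (s, (y, z))) > 0" using pos unfolding bt et .
    have sfy: "s = f y"
    proof (rule ccontr)
      assume "s \<noteq> f y"
      then have "Pm JJ n L (\<lambda>t'. (b t', e t') = (s, (y, z))) = Pm JJ n L (\<lambda>_. False)"
        by (intro Pm_cong5) (auto simp: b_def e_def dest!: J_nz)
      then show False using pos1 Pm_False by simp
    qed
    have eqa: "Pm JJ n L (\<lambda>t'. (b t', e t') = (s, (y, z))) = PYZ JJ n L y z"
      unfolding PYZ_def by (intro Pm_cong5) (auto simp: b_def e_def sfy dest!: J_nz)
    have p1: "PYZ JJ n L y z > 0" using pos1 eqa by simp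
    have bad': "\<not> (ereal Rc \<ge> ereal (1 / real n) * llr (pmf (QYZS s) (y, z)) (PYZ JJ n L y z) - ereal \<eta>)"
      using bad unfolding B_def bt et by simp
    show "Pm JJ n L (\<lambda>t'. (b t', e t') = (b t, e t))
        \<le> exp (- real n * \<eta>) / real L * 1 * pmf (QYZS (b t)) (e t)"
      unfolding bt et eqa using llr_A5[OF n_pos L_pos rate pmf_nonneg p1 bad'] by simp
  qed
  also have "(\<Sum>u\<in>b ` T1 n L. 1::real) \<le> real L"
  proof -
    have "b ` T1 n L \<subseteq> {1..L}" unfolding b_def T1_def by auto
    then have "card (b ` T1 n L) \<le> card {1..L}" by (intro card_mono) auto
    then show ?thesis by simp
  qed
  finally have "Pm JJ n L (\<lambda>t. B (b t) (e t)) \<le> exp (- real n * \<eta>)"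
    using L_pos by (simp add: field_simps)
  moreover have "(\<lambda>t. B (b t) (e t)) = (\<lambda>(x, y, s, z, xh). \<not> (ereal Rc \<ge> ereal (1 / real n) * llr (pmf (QYZS s) (y, z)) (PYZ JJ n L y z) - ereal \<eta>))"
    unfolding B_def b_def e_def by (rule ext) (simp add: split_beta)
  ultimately show ?thesis by simp
qed

lemma PrWT_expand:
  "PrWT n M L PX PYX PZX f h E = (\<Sum>w\<in>{1..M}. \<Sum>xs\<in>PiE {1..M} (\<lambda>_. seqs n). \<Sum>ys\<in>PiE {1..M} (\<lambda>_. seqs n).
     \<Sum>ss\<in>PiE {1..M} (\<lambda>_. {1..L}). \<Sum>z\<in>seqs n. \<Sum>xh\<in>seqs n.
     if (w, xs, ys, ss, z, xh) \<in> E then PWT M PX PYX PZX f h (w, xs, ys, ss, z, xh) else 0)"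
  unfolding PrWT_def TW_def
  by (simp add: sum.inter_restrict finite_PiE sum_Times)

definition FF where "FF x y s = pn PX x * chn PYX x y * (if s = f y then 1 else (0::real))"

lemma FF_nonneg: "FF x y s \<ge> 0"
  unfolding FF_def by (simp add: pn_nonneg chn_nonneg)

lemma sum_FF: "(\<Sum>x\<in>seqs n. \<Sum>y\<in>seqs n. \<Sum>s\<in>{1..L}. FF x y s) = 1"
proof -
  have "(\<Sum>x\<in>seqs n. \<Sum>y\<in>seqs n. \<Sum>s\<in>{1..L}. FF x y s) = (\<Sum>x\<in>seqs n. \<Sum>y\<in>seqs n. pn PX x * chn PYX x y)"
    unfolding FF_def by (intro sum.cong refl) (simp add: f_in')
  also have "\<dots> = 1"
    by (simp add: sum_distrib_left[symmetric] sum_chn[unfolded seqs_def] seqs_def sum_pn[unfolded seqs_def])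
  finally show ?thesis .
qed

lemma Pm_expand: "Pm JJ n L E = (\<Sum>x\<in>seqs n. \<Sum>y\<in>seqs n. \<Sum>s\<in>{1..L}. \<Sum>z\<in>seqs n. \<Sum>xh\<in>seqs n.
      if E (x, y, s, z, xh) then FF x y s * (chn PZX x z * (if xh = h s z then 1 else 0)) else 0)"
  unfolding Pm_def FF_def joint1_def by (simp add: sum.inter_filter T1_def sum_Times mult_ac cong: if_cong)

lemma h_in': "Suc 0 \<le> s \<Longrightarrow> s \<le> L \<Longrightarrow> z \<in> seqs n \<Longrightarrow> h s z \<in> seqs n"
  using h_in by auto

lemma sum_xh: "s \<in> {1..L} \<Longrightarrow> z \<in> seqs n \<Longrightarrow>
   (\<Sum>xh\<in>seqs n. c * (if xh = h s z then 1 else 0)) = (c::real)"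
  using h_in[of s z] by simp

lemma sum_K: "x \<in> seqs n \<Longrightarrow> s \<in> {1..L} \<Longrightarrow>
   (\<Sum>z\<in>seqs n. \<Sum>xh\<in>seqs n. chn PZX x z * (if xh = h s z then 1 else 0)) = 1"
proof -
  assume x: "x \<in> seqs n" and s: "s \<in> {1..L}"
  have "(\<Sum>z\<in>seqs n. \<Sum>xh\<in>seqs n. chn PZX x z * (if xh = h s z then 1 else 0)) = (\<Sum>z\<in>seqs n. chn PZX x z)"
    by (intro sum.cong refl) (rule sum_xh[OF s])
  also have "\<dots> = 1" using sum_chn[of x n PZX] x by (simp add: seqs_def)
  finally show ?thesis .
qed

lemma PS_eq: "s \<in> {1..L} \<Longrightarrow> PS JJ n L s = (\<Sum>x\<in>seqs n. \<Sum>y\<in>seqs n. FF x y s)"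
proof -
  assume s: "s \<in> {1..L}"
  have "PS JJ n L s = (\<Sum>x\<in>seqs n. \<Sum>y\<in>seqs n. \<Sum>s'\<in>{1..L}. \<Sum>z\<in>seqs n. \<Sum>xh\<in>seqs n.
      if s' = s then FF x y s' * (chn PZX x z * (if xh = h s' z then 1 else 0)) else 0)"
    unfolding PS_def Pm_expand by simp
  also have "\<dots> = (\<Sum>x\<in>seqs n. \<Sum>y\<in>seqs n. FF x y s * (\<Sum>z\<in>seqs n. \<Sum>xh\<in>seqs n. chn PZX x z * (if xh = h s z then 1 else 0)))"
    using s by (simp only: sum_if_const sum.delta finite_atLeastAtMost if_True sum_distrib_left)
  also have "\<dots> = (\<Sum>x\<in>seqs n. \<Sum>y\<in>seqs n. FF x y s)"
    using s by (intro sum.cong refl) (simp only: sum_K mult_1_right)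
  finally show ?thesis .
qed

lemma PSZ_eq: "s \<in> {1..L} \<Longrightarrow> z \<in> seqs n \<Longrightarrow>
  PSZ JJ n L s z = (\<Sum>x\<in>seqs n. \<Sum>y\<in>seqs n. FF x y s * chn PZX x z)"
proof -
  assume s: "s \<in> {1..L}" and z: "z \<in> seqs n"
  have "PSZ JJ n L s z = (\<Sum>x\<in>seqs n. \<Sum>y\<in>seqs n. \<Sum>s'\<in>{1..L}. \<Sum>z'\<in>seqs n. \<Sum>xh\<in>seqs n.
      if s' = s \<and> z' = z then FF x y s' * (chn PZX x z' * (if xh = h s' z' then 1 else 0)) else 0)"
    unfolding PSZ_def Pm_expand by simp
  also have "\<dots> = (\<Sum>x\<in>seqs n. \<Sum>y\<in>seqs n. \<Sum>s'\<in>{1..L}. if s' = s then \<Sum>z'\<in>seqs n.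
      if z' = z then \<Sum>xh\<in>seqs n. FF x y s' * (chn PZX x z' * (if xh = h s' z' then 1 else 0)) else 0 else 0)"
    by (intro sum.cong refl) (auto simp: sum_if_const)
  also have "\<dots> = (\<Sum>x\<in>seqs n. \<Sum>y\<in>seqs n. \<Sum>xh\<in>seqs n. FF x y s * (chn PZX x z * (if xh = h s z then 1 else 0)))"
    using s z by (simp only: sum.delta finite_atLeastAtMost finite_seqs if_True)
  also have "\<dots> = (\<Sum>x\<in>seqs n. \<Sum>y\<in>seqs n. FF x y s * chn PZX x z)"
    using s z by (intro sum.cong refl) (simp only: mult.assoc[symmetric] sum_xh)
  finally show ?thesis .
qed

lemma M1:
  "PrWT n M L PX PYX PZX f h {(w, xs, ys, ss, z, xh). E (xs w, ys w, ss w, z, xh)} = Pm JJ n L E"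
proof -
  define G where "G x y s = (1 / real M) * (\<Sum>z\<in>seqs n. \<Sum>xh\<in>seqs n.
      if E (x, y, s, z, xh) then chn PZX x z * (if xh = h s z then 1 else 0) else 0)" for x y s
  have PmE: "Pm JJ n L E = (\<Sum>x\<in>seqs n. \<Sum>y\<in>seqs n. \<Sum>s\<in>{1..L}. \<Sum>z\<in>seqs n. \<Sum>xh\<in>seqs n.
      if E (x, y, s, z, xh) then FF x y s * (chn PZX x z * (if xh = h s z then 1 else 0)) else 0)"
    unfolding Pm_def FF_def joint1_def by (simp add: sum.inter_filter T1_def sum_Times mult_ac cong: if_cong)
  have step: "(\<Sum>xs\<in>PiE {1..M} (\<lambda>_. seqs n). \<Sum>ys\<in>PiE {1..M} (\<lambda>_. seqs n).
     \<Sum>ss\<in>PiE {1..M} (\<lambda>_. {1..L}). \<Sum>z\<in>seqs n. \<Sum>xh\<in>seqs n.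
     if (w, xs, ys, ss, z, xh) \<in> {(w, xs, ys, ss, z, xh). E (xs w, ys w, ss w, z, xh)}
     then PWT M PX PYX PZX f h (w, xs, ys, ss, z, xh) else 0) = (1 / real M) * Pm JJ n L E"
    if w: "w \<in> {1..M}" for w
  proof -
    have "(\<Sum>xs\<in>PiE {1..M} (\<lambda>_. seqs n). \<Sum>ys\<in>PiE {1..M} (\<lambda>_. seqs n).
     \<Sum>ss\<in>PiE {1..M} (\<lambda>_. {1..L}). \<Sum>z\<in>seqs n. \<Sum>xh\<in>seqs n.
     if (w, xs, ys, ss, z, xh) \<in> {(w, xs, ys, ss, z, xh). E (xs w, ys w, ss w, z, xh)}
     then PWT M PX PYX PZX f h (w, xs, ys, ss, z, xh) else 0)
     = (\<Sum>xs\<in>PiE {1..M} (\<lambda>_. seqs n). \<Sum>ys\<in>PiE {1..M} (\<lambda>_. seqs n).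
     \<Sum>ss\<in>PiE {1..M} (\<lambda>_. {1..L}). (\<Prod>m\<in>{1..M}. FF (xs m) (ys m) (ss m)) * G (xs w) (ys w) (ss w))"
      unfolding G_def FF_def PWT_def
      by (intro sum.cong refl) (simp add: sum_distrib_left mult_ac mult_if0 mult_if0' div_if0 cong: if_cong)
    also have "\<dots> = (\<Sum>x\<in>seqs n. \<Sum>y\<in>seqs n. \<Sum>s\<in>{1..L}. FF x y s * G x y s)
        * (\<Prod>m\<in>{1..M}-{w}. \<Sum>x\<in>seqs n. \<Sum>y\<in>seqs n. \<Sum>s\<in>{1..L}. FF x y s)"
      by (rule L3) (use w in auto)
    also have "\<dots> = (\<Sum>x\<in>seqs n. \<Sum>y\<in>seqs n. \<Sum>s\<in>{1..L}. FF x y s * G x y s)"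
      unfolding sum_FF by simp
    also have "\<dots> = (1 / real M) * Pm JJ n L E"
      unfolding PmE G_def by (simp add: sum_distrib_left mult_ac mult_if0 mult_if0' div_if0 cong: if_cong)
    finally show ?thesis .
  qed
  have "PrWT n M L PX PYX PZX f h {(w, xs, ys, ss, z, xh). E (xs w, ys w, ss w, z, xh)}
      = (\<Sum>w\<in>{1..M}. (1 / real M) * Pm JJ n L E)"
    unfolding PrWT_expand by (rule sum.cong) (use step in auto)
  also have "\<dots> = Pm JJ n L E" using M_pos by simp
  finally show ?thesis .
qed

definition PS' where "PS' s = (\<Sum>x\<in>seqs n. \<Sum>y\<in>seqs n. FF x y s)"

lemma PS'_nonneg: "PS' s \<ge> 0"
  unfolding PS'_def by (intro sum_nonneg) (simp add: FF_nonneg)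

lemma sum_PS': "(\<Sum>s\<in>{1..L}. PS' s) = 1"
proof -
  have "(\<Sum>s\<in>{1..L}. PS' s) = (\<Sum>x\<in>seqs n. \<Sum>s\<in>{1..L}. \<Sum>y\<in>seqs n. FF x y s)"
    unfolding PS'_def by (rule sum.swap)
  also have "\<dots> = (\<Sum>x\<in>seqs n. \<Sum>y\<in>seqs n. \<Sum>s\<in>{1..L}. FF x y s)"
    by (intro sum.cong refl) (rule sum.swap)
  also have "\<dots> = 1" by (rule sum_FF)
  finally show ?thesis .
qed

lemma sum_prod_PS': "(\<Sum>ss\<in>PiE {1..M} (\<lambda>_. {1..L}). \<Prod>m\<in>{1..M}. PS' (ss m)) = 1"
proof -
  have "(\<Prod>m\<in>{1..M}. \<Sum>s\<in>{1..L}. PS' s) = (\<Sum>ss\<in>PiE {1..M} (\<lambda>_. {1..L}). \<Prod>m\<in>{1..M}. PS' (ss m))"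
    by (rule prod_sum_PiE) auto
  then show ?thesis unfolding sum_PS' by simp
qed

lemma B6_local:
  fixes g :: "(nat \<Rightarrow> nat) \<Rightarrow> 'z list \<Rightarrow> nat" and QZ :: "'z list pmf" and Ri \<eta> :: real
  assumes rate: "ln (real M) / real n \<ge> Ri"
    and w: "w \<in> {1..M}" and ss: "ss \<in> PiE {1..M} (\<lambda>_. {1..L})"
  defines "C \<equiv> \<lambda>z. g ss z = w \<and> \<not> (ereal Ri \<le> ereal (1 / real n) * llr (PZgS JJ n L z (ss w)) (pmf QZ z) + ereal \<eta>)"
  shows "(\<Sum>xs\<in>PiE {1..M} (\<lambda>_. seqs n). \<Sum>ys\<in>PiE {1..M} (\<lambda>_. seqs n). \<Sum>z\<in>seqs n. \<Sum>xh\<in>seqs n.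
      if C z then PWT M PX PYX PZX f h (w, xs, ys, ss, z, xh) else 0)
    \<le> exp (- real n * \<eta>) * (\<Sum>z\<in>seqs n. if g ss z = w then pmf QZ z else 0) * (\<Prod>m\<in>{1..M}. PS' (ss m))"
proof -
  define c where "c = exp (- real n * \<eta>)"
  define s where "s = ss w"
  have s: "s \<in> {1..L}" using ss w unfolding s_def by auto
  define G where "G x (y::'y list) = (\<Sum>z\<in>seqs n. if C z then chn PZX x z / real M else 0)" for x y
  define PSZ' where "PSZ' z = (\<Sum>x\<in>seqs n. \<Sum>y\<in>seqs n. FF x y s * chn PZX x z)" for z
  have a: "(\<Sum>xs\<in>PiE {1..M} (\<lambda>_. seqs n). \<Sum>ys\<in>PiE {1..M} (\<lambda>_. seqs n). \<Sum>z\<in>seqs n. \<Sum>xh\<in>seqs n.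
      if C z then PWT M PX PYX PZX f h (w, xs, ys, ss, z, xh) else 0)
    = (\<Sum>xs\<in>PiE {1..M} (\<lambda>_. seqs n). \<Sum>ys\<in>PiE {1..M} (\<lambda>_. seqs n).
      (\<Prod>m\<in>{1..M}. FF (xs m) (ys m) (ss m)) * G (xs w) (ys w))"
  proof (intro sum.cong refl)
    fix xs ys
    have "(\<Sum>z\<in>seqs n. \<Sum>xh\<in>seqs n. if C z then PWT M PX PYX PZX f h (w, xs, ys, ss, z, xh) else 0)
      = (\<Sum>z\<in>seqs n. \<Sum>xh\<in>seqs n. (if C z then (\<Prod>m\<in>{1..M}. FF (xs m) (ys m) (ss m)) * (chn PZX (xs w) z / real M) else 0)
           * (if xh = h s z then 1 else 0))"
      unfolding PWT_def FF_def s_def by (intro sum.cong refl) (simp add: mult_ac)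
    also have "\<dots> = (\<Sum>z\<in>seqs n. if C z then (\<Prod>m\<in>{1..M}. FF (xs m) (ys m) (ss m)) * (chn PZX (xs w) z / real M) else 0)"
      by (intro sum.cong refl) (rule sum_xh[OF s])
    also have "\<dots> = (\<Prod>m\<in>{1..M}. FF (xs m) (ys m) (ss m)) * G (xs w) (ys w)"
      unfolding G_def by (simp only: sum_distrib_left mult_if0)
    finally show "(\<Sum>z\<in>seqs n. \<Sum>xh\<in>seqs n. if C z then PWT M PX PYX PZX f h (w, xs, ys, ss, z, xh) else 0)
      = (\<Prod>m\<in>{1..M}. FF (xs m) (ys m) (ss m)) * G (xs w) (ys w)" .
  qed
  also have "\<dots> = (\<Sum>x\<in>seqs n. \<Sum>y\<in>seqs n. FF x y (ss w) * G x y) * (\<Prod>m\<in>{1..M}-{w}. \<Sum>x\<in>seqs n. \<Sum>y\<in>seqs n. FF x y (ss m))"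
    by (rule L2[where F="\<lambda>m x y. FF x y (ss m)"]) (use w in auto)
  also have "(\<Sum>x\<in>seqs n. \<Sum>y\<in>seqs n. FF x y (ss w) * G x y) = (\<Sum>z\<in>seqs n. if C z then PSZ' z / real M else 0)"
  proof -
    have "(\<Sum>x\<in>seqs n. \<Sum>y\<in>seqs n. FF x y (ss w) * G x y)
        = (\<Sum>x\<in>seqs n. \<Sum>y\<in>seqs n. \<Sum>z\<in>seqs n. if C z then FF x y s * chn PZX x z / real M else 0)"
      unfolding G_def s_def by (simp only: sum_distrib_left mult_if0 times_divide_eq_right)
    also have "\<dots> = (\<Sum>x\<in>seqs n. \<Sum>z\<in>seqs n. \<Sum>y\<in>seqs n. if C z then FF x y s * chn PZX x z / real M else 0)"
      by (intro sum.cong refl) (rule sum.swap)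
    also have "\<dots> = (\<Sum>z\<in>seqs n. \<Sum>x\<in>seqs n. \<Sum>y\<in>seqs n. if C z then FF x y s * chn PZX x z / real M else 0)"
      by (rule sum.swap)
    also have "\<dots> = (\<Sum>z\<in>seqs n. if C z then PSZ' z / real M else 0)"
      unfolding PSZ'_def by (intro sum.cong refl) (simp only: sum_if_const sum_divide_distrib)
    finally show ?thesis .
  qed
  also have "(\<Prod>m\<in>{1..M}-{w}. \<Sum>x\<in>seqs n. \<Sum>y\<in>seqs n. FF x y (ss m)) = (\<Prod>m\<in>{1..M}-{w}. PS' (ss m))"
    unfolding PS'_def ..
  also have "(\<Sum>z\<in>seqs n. if C z then PSZ' z / real M else 0) * (\<Prod>m\<in>{1..M}-{w}. PS' (ss m))
     \<le> (\<Sum>z\<in>seqs n. if g ss z = w then c * PS' s * pmf QZ z else 0) * (\<Prod>m\<in>{1..M}-{w}. PS' (ss m))"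
  proof (rule mult_right_mono)
    show "0 \<le> (\<Prod>m\<in>{1..M}-{w}. PS' (ss m))" by (intro prod_nonneg) (simp add: PS'_nonneg)
    show "(\<Sum>z\<in>seqs n. if C z then PSZ' z / real M else 0) \<le> (\<Sum>z\<in>seqs n. if g ss z = w then c * PS' s * pmf QZ z else 0)"
    proof (rule sum_mono)
      fix z :: "'z list" assume z: "z \<in> seqs n"
      have eqz: "PSZ' z = PSZ JJ n L s z" unfolding PSZ'_def using PSZ_eq[OF s z] by simp
      have eqs: "PS' s = PS JJ n L s" unfolding PS'_def using PS_eq[OF s] by simp
      have nn: "0 \<le> c * PS' s * pmf QZ z" unfolding c_def by (simp add: PS'_nonneg)
      show "(if C z then PSZ' z / real M else 0) \<le> (if g ss z = w then c * PS' s * pmf QZ z else 0)"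
      proof (cases "C z")
        case False then show ?thesis using nn by simp
      next
        case True
        then have gw: "g ss z = w" and bad: "\<not> (ereal Ri \<le> ereal (1 / real n) * llr (PZgS JJ n L z s) (pmf QZ z) + ereal \<eta>)"
          unfolding C_def s_def by auto
        show ?thesis
        proof (cases "PSZ JJ n L s z = 0")
          case True then show ?thesis using gw nn eqz by simp
        next
          case False
          then have p1: "PSZ JJ n L s z > 0" using Pm_nonneg unfolding PSZ_def by (simp add: less_le)
          have le: "PSZ JJ n L s z \<le> PS JJ n L s" unfolding PSZ_def PS_def by (rule Pm_mono) auto
          then have p2: "PS JJ n L s > 0" using p1 by linarith
          have "PZgS JJ n L z s > 0" using p1 p2 unfolding PZgS_def by simp
          from llr_A6[OF n_pos M_pos rate this pmf_nonneg bad]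
          have "PSZ JJ n L s z / PS JJ n L s \<le> real M * c * pmf QZ z" unfolding PZgS_def c_def .
          then have "PSZ JJ n L s z \<le> real M * c * pmf QZ z * PS JJ n L s" using p2 by (simp add: divide_le_eq)
          then have "PSZ JJ n L s z / real M \<le> c * PS JJ n L s * pmf QZ z" using M_pos by (simp add: divide_le_eq mult_ac)
          then show ?thesis using gw eqz eqs True by simp
        qed
      qed
    qed
  qed
  also have "(\<Sum>z\<in>seqs n. if g ss z = w then c * PS' s * pmf QZ z else 0) * (\<Prod>m\<in>{1..M}-{w}. PS' (ss m))
     = c * (\<Sum>z\<in>seqs n. if g ss z = w then pmf QZ z else 0) * (PS' s * (\<Prod>m\<in>{1..M}-{w}. PS' (ss m)))"
    by (simp add: sum_distrib_left sum_distrib_right mult_if0 mult_if0' mult_ac cong: if_cong)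
  also have "PS' s * (\<Prod>m\<in>{1..M}-{w}. PS' (ss m)) = (\<Prod>m\<in>{1..M}. PS' (ss m))"
    unfolding s_def using w by (simp add: prod.remove)
  finally show ?thesis unfolding c_def .
qed

lemma B6:
  fixes g :: "(nat \<Rightarrow> nat) \<Rightarrow> 'z list \<Rightarrow> nat" and QZ :: "'z list pmf" and Ri \<eta> :: real
  assumes rate: "ln (real M) / real n \<ge> Ri"
  shows "PrWT n M L PX PYX PZX f h {(w, xs, ys, ss, z, xh). g ss z = w \<and>
      \<not> (ereal Ri \<le> ereal (1 / real n) * llr (PZgS JJ n L z (ss w)) (pmf QZ z) + ereal \<eta>)}
    \<le> exp (- real n * \<eta>)"
proof -
  define c where "c = exp (- real n * \<eta>)"
  define C where "C w ss z \<longleftrightarrow> g ss z = w \<and> \<not> (ereal Ri \<le> ereal (1 / real n) * llr (PZgS JJ n L z (ss w)) (pmf QZ z) + ereal \<eta>)"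
    for w ss z
  define Qw where "Qw w ss = (\<Sum>z\<in>seqs n. if g ss z = w then pmf QZ z else 0)" for w ss
  define P where "P ss = (\<Prod>m\<in>{1..M}. PS' (ss m))" for ss
  have "PrWT n M L PX PYX PZX f h {(w, xs, ys, ss, z, xh). C w ss z}
    = (\<Sum>w\<in>{1..M}. \<Sum>xs\<in>PiE {1..M} (\<lambda>_. seqs n). \<Sum>ys\<in>PiE {1..M} (\<lambda>_. seqs n).
     \<Sum>ss\<in>PiE {1..M} (\<lambda>_. {1..L}). \<Sum>z\<in>seqs n. \<Sum>xh\<in>seqs n.
     if C w ss z then PWT M PX PYX PZX f h (w, xs, ys, ss, z, xh) else 0)"
    unfolding PrWT_expand by simp
  also have "\<dots> = (\<Sum>w\<in>{1..M}. \<Sum>ss\<in>PiE {1..M} (\<lambda>_. {1..L}). \<Sum>xs\<in>PiE {1..M} (\<lambda>_. seqs n). \<Sum>ys\<in>PiE {1..M} (\<lambda>_. seqs n).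
     \<Sum>z\<in>seqs n. \<Sum>xh\<in>seqs n.
     if C w ss z then PWT M PX PYX PZX f h (w, xs, ys, ss, z, xh) else 0)"
  proof (intro sum.cong refl)
    fix w
    have "(\<Sum>xs\<in>PiE {1..M} (\<lambda>_. seqs n). \<Sum>ys\<in>PiE {1..M} (\<lambda>_. seqs n).
     \<Sum>ss\<in>PiE {1..M} (\<lambda>_. {1..L}). \<Sum>z\<in>seqs n. \<Sum>xh\<in>seqs n.
     if C w ss z then PWT M PX PYX PZX f h (w, xs, ys, ss, z, xh) else 0)
     = (\<Sum>xs\<in>PiE {1..M} (\<lambda>_. seqs n). \<Sum>ss\<in>PiE {1..M} (\<lambda>_. {1..L}). \<Sum>ys\<in>PiE {1..M} (\<lambda>_. seqs n).
     \<Sum>z\<in>seqs n. \<Sum>xh\<in>seqs n.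
     if C w ss z then PWT M PX PYX PZX f h (w, xs, ys, ss, z, xh) else 0)"
      by (intro sum.cong refl) (rule sum.swap)
    also have "\<dots> = (\<Sum>ss\<in>PiE {1..M} (\<lambda>_. {1..L}). \<Sum>xs\<in>PiE {1..M} (\<lambda>_. seqs n). \<Sum>ys\<in>PiE {1..M} (\<lambda>_. seqs n).
     \<Sum>z\<in>seqs n. \<Sum>xh\<in>seqs n.
     if C w ss z then PWT M PX PYX PZX f h (w, xs, ys, ss, z, xh) else 0)"
      by (rule sum.swap)
    finally show "(\<Sum>xs\<in>PiE {1..M} (\<lambda>_. seqs n). \<Sum>ys\<in>PiE {1..M} (\<lambda>_. seqs n).
     \<Sum>ss\<in>PiE {1..M} (\<lambda>_. {1..L}). \<Sum>z\<in>seqs n. \<Sum>xh\<in>seqs n.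
     if C w ss z then PWT M PX PYX PZX f h (w, xs, ys, ss, z, xh) else 0)
     = (\<Sum>ss\<in>PiE {1..M} (\<lambda>_. {1..L}). \<Sum>xs\<in>PiE {1..M} (\<lambda>_. seqs n). \<Sum>ys\<in>PiE {1..M} (\<lambda>_. seqs n).
     \<Sum>z\<in>seqs n. \<Sum>xh\<in>seqs n.
     if C w ss z then PWT M PX PYX PZX f h (w, xs, ys, ss, z, xh) else 0)" .
  qed
  also have "\<dots> \<le> (\<Sum>w\<in>{1..M}. \<Sum>ss\<in>PiE {1..M} (\<lambda>_. {1..L}). c * Qw w ss * P ss)"
  proof (intro sum_mono)
    fix w ss assume w: "w \<in> {1..M}" and ss: "ss \<in> PiE {1..M} (\<lambda>_. {1..L})"
    show "(\<Sum>xs\<in>PiE {1..M} (\<lambda>_. seqs n). \<Sum>ys\<in>PiE {1..M} (\<lambda>_. seqs n).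
     \<Sum>z\<in>seqs n. \<Sum>xh\<in>seqs n.
     if C w ss z then PWT M PX PYX PZX f h (w, xs, ys, ss, z, xh) else 0) \<le> c * Qw w ss * P ss"
      using B6_local[OF rate w ss, of g QZ \<eta>] unfolding C_def c_def Qw_def P_def by simp
  qed
  also have "\<dots> = c * (\<Sum>ss\<in>PiE {1..M} (\<lambda>_. {1..L}). P ss * (\<Sum>w\<in>{1..M}. Qw w ss))"
    by (subst sum.swap) (simp add: sum_distrib_left sum_distrib_right mult_ac)
  also have "\<dots> \<le> c * (\<Sum>ss\<in>PiE {1..M} (\<lambda>_. {1..L}). P ss * 1)"
  proof (rule mult_left_mono, rule sum_mono)
    show "0 \<le> c" unfolding c_def by simp
    fix ss
    have "(\<Sum>w\<in>{1..M}. Qw w ss) = (\<Sum>z\<in>seqs n. \<Sum>w\<in>{1..M}. if g ss z = w then pmf QZ z else 0)"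
      unfolding Qw_def by (rule sum.swap)
    also have "\<dots> \<le> (\<Sum>z\<in>seqs n. pmf QZ z)"
      by (intro sum_mono) (simp add: sum.delta')
    also have "\<dots> \<le> 1" by (rule pmf_sum_le1) simp
    finally have "(\<Sum>w\<in>{1..M}. Qw w ss) \<le> 1" .
    moreover have "P ss \<ge> 0" unfolding P_def by (intro prod_nonneg) (simp add: PS'_nonneg)
    ultimately show "P ss * (\<Sum>w\<in>{1..M}. Qw w ss) \<le> P ss * 1" by (intro mult_left_mono)
  qed
  also have "\<dots> = c" unfolding P_def using sum_prod_PS' by simp
  finally show ?thesis unfolding C_def c_def .
qed

lemma prod_delta:
  fixes a :: "nat \<Rightarrow> real" and ys :: "nat \<Rightarrow> 'y list"
  assumes ss: "ss \<in> PiE {1..M} (\<lambda>_. {1..L})"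
  shows "(\<Prod>m\<in>{1..M}. a m * (if ss m = f (ys m) then 1 else 0))
    = (if ss = restrict (\<lambda>m. f (ys m)) {1..M} then \<Prod>m\<in>{1..M}. a m else 0)"
proof (cases "ss = restrict (\<lambda>m. f (ys m)) {1..M}")
  case True
  then have eqm: "\<And>m. m \<in> {1..M} \<Longrightarrow> ss m = f (ys m)" by simp
  have "(\<Prod>m\<in>{1..M}. a m * (if ss m = f (ys m) then 1 else 0)) = (\<Prod>m\<in>{1..M}. a m)"
    by (rule prod.cong) (simp_all add: eqm)
  then show ?thesis using True by simp
next
  case False
  have "\<exists>m\<in>{1..M}. ss m \<noteq> f (ys m)"
  proof (rule ccontr)
    assume "\<not> (\<exists>m\<in>{1..M}. ss m \<noteq> f (ys m))"
    then have "\<forall>m\<in>{1..M}. ss m = f (ys m)" by blast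
    then have "restrict ss {1..M} = restrict (\<lambda>m. f (ys m)) {1..M}" by (intro restrict_ext) simp
    moreover have "restrict ss {1..M} = ss" using ss by (rule PiE_restrict)
    ultimately show False using False by simp
  qed
  then obtain m where m: "m \<in> {1..M}" "ss m \<noteq> f (ys m)" by blast
  then have "(\<Prod>m\<in>{1..M}. a m * (if ss m = f (ys m) then 1 else 0)) = 0"
    by (intro prod_zero) auto
  then show ?thesis using False by simp
qed

lemma B0:
  fixes g :: "(nat \<Rightarrow> nat) \<Rightarrow> 'z list \<Rightarrow> nat" and d :: "'x \<Rightarrow> 'xh \<Rightarrow> real" and D :: real
  shows "Pc n M PX PYX PZX f g h d D = PrWT n M L PX PYX PZX f h {(w, xs, ys, ss, z, xh). g ss z = w \<and> dist_n d (xs w) xh \<le> D}"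
  unfolding Pc_def PrWT_expand
proof (intro sum.cong refl)
  fix w and xs :: "nat \<Rightarrow> 'x list" and ys :: "nat \<Rightarrow> 'y list"
  assume w: "w \<in> {1..M}" and xs: "xs \<in> PiE {1..M} (\<lambda>_. seqs n)" and ys: "ys \<in> PiE {1..M} (\<lambda>_. seqs n)"
  define s0 where "s0 = restrict (\<lambda>m. f (ys m)) {1..M}"
  define A where "A = (\<Prod>m\<in>{1..M}. pn PX (xs m) * chn PYX (xs m) (ys m))"
  have s0: "s0 \<in> PiE {1..M} (\<lambda>_. {1..L})"
    unfolding s0_def restrict_PiE_iff
  proof
    fix m assume "m \<in> {1..M}"
    then have "ys m \<in> seqs n" by (rule PiE_mem[OF ys])
    then show "f (ys m) \<in> {1..L}" by (rule f_in)
  qed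
  have s0w: "s0 w \<in> {1..L}" using s0 w by auto
  define Phi where "Phi ss = (\<Sum>z\<in>seqs n. \<Sum>xh\<in>seqs n. if g ss z = w \<and> dist_n d (xs w) xh \<le> D
       then 1 / real M * A * chn PZX (xs w) z * (if xh = h (ss w) z then 1 else 0) else 0)" for ss
  have "(\<Sum>ss\<in>PiE {1..M} (\<lambda>_. {1..L}). \<Sum>z\<in>seqs n. \<Sum>xh\<in>seqs n.
       if (w, xs, ys, ss, z, xh) \<in> {(w, xs, ys, ss, z, xh). g ss z = w \<and> dist_n d (xs w) xh \<le> D}
       then PWT M PX PYX PZX f h (w, xs, ys, ss, z, xh) else 0)
     = (\<Sum>ss\<in>PiE {1..M} (\<lambda>_. {1..L}). if ss = s0 then Phi ss else 0)"
  proof (intro sum.cong refl)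
    fix ss :: "nat \<Rightarrow> nat" assume ss: "ss \<in> PiE {1..M} (\<lambda>_. {1..L})"
    have pd: "(\<Prod>m\<in>{1..M}. pn PX (xs m) * chn PYX (xs m) (ys m) * (if ss m = f (ys m) then 1 else 0))
       = (if ss = s0 then A else 0)" unfolding s0_def A_def by (rule prod_delta[OF ss])
    have pt: "(if (w, xs, ys, ss, z, xh) \<in> {(w, xs, ys, ss, z, xh). g ss z = w \<and> dist_n d (xs w) xh \<le> D}
       then PWT M PX PYX PZX f h (w, xs, ys, ss, z, xh) else 0)
       = (if ss = s0 then (if g ss z = w \<and> dist_n d (xs w) xh \<le> D
       then 1 / real M * A * chn PZX (xs w) z * (if xh = h (ss w) z then 1 else 0) else 0) else 0)" for z xh
      unfolding PWT_def by (simp only: mem_Collect_eq prod.case pd) simp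
    show "(\<Sum>z\<in>seqs n. \<Sum>xh\<in>seqs n.
       if (w, xs, ys, ss, z, xh) \<in> {(w, xs, ys, ss, z, xh). g ss z = w \<and> dist_n d (xs w) xh \<le> D}
       then PWT M PX PYX PZX f h (w, xs, ys, ss, z, xh) else 0) = (if ss = s0 then Phi ss else 0)"
      unfolding pt Phi_def by (simp only: sum_if_const)
  qed
  also have "\<dots> = Phi s0"
  proof -
    have fin: "finite (PiE {1..M} (\<lambda>_. {1..L}))" by (rule finite_PiE) auto
    show ?thesis using s0 by (simp only: sum.delta[OF fin] if_True)
  qed
  also have "Phi s0 = (\<Sum>z\<in>seqs n. if g s0 z = w \<and> dist_n d (xs w) (h (s0 w) z) \<le> D
       then 1 / real M * A * chn PZX (xs w) z else 0)"
    unfolding Phi_def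
  proof (intro sum.cong refl)
    fix z :: "'z list" assume z: "z \<in> seqs n"
    have hz: "h (s0 w) z \<in> seqs n" by (rule h_in[OF s0w z])
    show "(\<Sum>xh\<in>seqs n. if g s0 z = w \<and> dist_n d (xs w) xh \<le> D
       then 1 / real M * A * chn PZX (xs w) z * (if xh = h (s0 w) z then 1 else 0) else 0)
      = (if g s0 z = w \<and> dist_n d (xs w) (h (s0 w) z) \<le> D then 1 / real M * A * chn PZX (xs w) z else 0)"
    proof -
      have "(if g s0 z = w \<and> dist_n d (xs w) xh \<le> D
       then 1 / real M * A * chn PZX (xs w) z * (if xh = h (s0 w) z then 1 else 0) else 0)
       = (if h (s0 w) z = xh then (if g s0 z = w \<and> dist_n d (xs w) (h (s0 w) z) \<le> D then 1 / real M * A * chn PZX (xs w) z else 0) else 0)"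
        for xh by auto
      then show ?thesis using hz by (simp only: sum.delta' finite_seqs if_True)
    qed
  qed
  finally show "(\<Sum>z\<in>seqs n. let ss = restrict (\<lambda>m. f (ys m)) {1..M} in
        1 / real M * (\<Prod>m\<in>{1..M}. pn PX (xs m) * chn PYX (xs m) (ys m)) * chn PZX (xs w) z *
        (if g ss z = w \<and> dist_n d (xs w) (h (ss w) z) \<le> D then 1 else 0))
     = (\<Sum>ss\<in>PiE {1..M} (\<lambda>_. {1..L}). \<Sum>z\<in>seqs n. \<Sum>xh\<in>seqs n.
       if (w, xs, ys, ss, z, xh) \<in> {(w, xs, ys, ss, z, xh). g ss z = w \<and> dist_n d (xs w) xh \<le> D}
       then PWT M PX PYX PZX f h (w, xs, ys, ss, z, xh) else 0)"
    unfolding s0_def A_def Let_def by (simp only: mult_ind)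
qed

end

theorem lemma9:
  fixes n M L :: nat
    and PX :: "'x::finite pmf" and PYX :: "'x \<Rightarrow> 'y::finite pmf" and PZX :: "'x \<Rightarrow> 'z::finite pmf"
    and d :: "'x \<Rightarrow> 'xh::finite \<Rightarrow> real" and D Rc Ri \<eta> :: real
    and f :: "'y list \<Rightarrow> nat" and g :: "(nat \<Rightarrow> nat) \<Rightarrow> 'z list \<Rightarrow> nat"
    and h :: "nat \<Rightarrow> 'z list \<Rightarrow> 'xh list"
    and QY :: "'y list pmf" and QZSY :: "nat \<Rightarrow> 'y list \<Rightarrow> 'z list pmf"
    and QXSYZ :: "nat \<Rightarrow> 'y list \<Rightarrow> 'z list \<Rightarrow> 'x list pmf"
    and QXYSZX :: "nat \<Rightarrow> 'z list \<Rightarrow> 'xh list \<Rightarrow> ('x list \<times> 'y list) pmf"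
    and QYZS :: "nat \<Rightarrow> ('y list \<times> 'z list) pmf" and QZ :: "'z list pmf"
  assumes n_pos: "n > 0" and M_pos: "M \<ge> 1" and L_pos: "L \<ge> 1"
    and f_range: "\<And>ys. length ys = n \<Longrightarrow> f ys \<in> {1..L}"
    and h_len: "\<And>s z. s \<in> {1..L} \<Longrightarrow> length z = n \<Longrightarrow> length (h s z) = n"
    and rate_c: "ln (real L) / real n \<le> Rc"
    and rate_i: "ln (real M) / real n \<ge> Ri"
    and eta_pos: "\<eta> > 0"
    and QY_supp: "set_pmf QY \<subseteq> seqs n"
    and QZSY_supp: "\<And>s y. set_pmf (QZSY s y) \<subseteq> seqs n"
    and QXSYZ_supp: "\<And>s y z. set_pmf (QXSYZ s y z) \<subseteq> seqs n"
    and QXYSZX_supp: "\<And>s z xh. set_pmf (QXYSZX s z xh) \<subseteq> seqs n \<times> seqs n"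
    and QYZS_supp: "\<And>s. set_pmf (QYZS s) \<subseteq> seqs n \<times> seqs n"
    and QZ_supp: "set_pmf QZ \<subseteq> seqs n"
  shows "Pc n M PX PYX PZX f g h d D
    \<le> PrWT n M L PX PYX PZX f h
        {(w, t). t \<in> A1 (joint1 PX PYX PZX f h) n L QY \<eta> w
                   \<inter> A2 (joint1 PX PYX PZX f h) n L QZSY \<eta> w
                   \<inter> A3 (joint1 PX PYX PZX f h) n L QXSYZ \<eta> w
                   \<inter> A4 (joint1 PX PYX PZX f h) n L QXYSZX \<eta> w
                   \<inter> A5 (joint1 PX PYX PZX f h) n L QYZS Rc \<eta> w
                   \<inter> A6 (joint1 PX PYX PZX f h) n L QZ Ri \<eta> w
                   \<inter> A7 d D w}
      + 6 * exp (- real n * \<eta>)"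
proof -
  note ctx = n_pos M_pos L_pos f_range h_len
  define J where "J = joint1 PX PYX PZX f h"
  define P where "P = PrWT n M L PX PYX PZX f h"
  define E1 where "E1 = (\<lambda>(x::'x list, y::'y list, s::nat, z::'z list, xh::'xh list).
      \<not> (ereal (1 / real n) * llr (PY J n L y) (pmf QY y) \<ge> ereal (- \<eta>)))"
  define E2 where "E2 = (\<lambda>(x::'x list, y::'y list, s::nat, z::'z list, xh::'xh list).
      \<not> (ereal (1 / real n) * llr (PZgY J n L z y) (pmf (QZSY s y) z) \<ge> ereal (- \<eta>)))"
  define E3 where "E3 = (\<lambda>(x::'x list, y::'y list, s::nat, z::'z list, xh::'xh list).
      \<not> (ereal (1 / real n) * llr (PXgYZ J n L x y z) (pmf (QXSYZ s y z) x) \<ge> ereal (- \<eta>)))"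
  define E4 where "E4 = (\<lambda>(x::'x list, y::'y list, s::nat, z::'z list, xh::'xh list).
      \<not> (ereal (1 / real n) * llr (PXYgSZ J n L x y s z) (pmf (QXYSZX s z xh) (x, y)) \<ge> ereal (- \<eta>)))"
  define E5 where "E5 = (\<lambda>(x::'x list, y::'y list, s::nat, z::'z list, xh::'xh list).
      \<not> (ereal Rc \<ge> ereal (1 / real n) * llr (pmf (QYZS s) (y, z)) (PYZ J n L y z) - ereal \<eta>))"
  define B1 where "B1 = {(w::nat, xs, ys, ss, z, xh). E1 (xs w, ys w, ss w, z, xh)}"
  define B2 where "B2 = {(w::nat, xs, ys, ss, z, xh). E2 (xs w, ys w, ss w, z, xh)}"
  define B3 where "B3 = {(w::nat, xs, ys, ss, z, xh). E3 (xs w, ys w, ss w, z, xh)}"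
  define B4 where "B4 = {(w::nat, xs, ys, ss, z, xh). E4 (xs w, ys w, ss w, z, xh)}"
  define B5 where "B5 = {(w::nat, xs, ys, ss, z, xh). E5 (xs w, ys w, ss w, z, xh)}"
  define B6 where "B6 = {(w::nat, xs::nat \<Rightarrow> 'x list, ys::nat \<Rightarrow> 'y list, ss, z, xh::'xh list). g ss z = w \<and>
      \<not> (ereal Ri \<le> ereal (1 / real n) * llr (PZgS J n L z (ss w)) (pmf QZ z) + ereal \<eta>)}"
  define Good where "Good = {(w::nat, xs, ys::nat \<Rightarrow> 'y list, ss, z, xh). g ss z = w \<and> dist_n d (xs w) xh \<le> D}"
  define S where "S = {(w::nat, t). t \<in> A1 (joint1 PX PYX PZX f h) n L QY \<eta> w
                   \<inter> A2 (joint1 PX PYX PZX f h) n L QZSY \<eta> w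
                   \<inter> A3 (joint1 PX PYX PZX f h) n L QXSYZ \<eta> w
                   \<inter> A4 (joint1 PX PYX PZX f h) n L QXYSZX \<eta> w
                   \<inter> A5 (joint1 PX PYX PZX f h) n L QYZS Rc \<eta> w
                   \<inter> A6 (joint1 PX PYX PZX f h) n L QZ Ri \<eta> w
                   \<inter> A7 d D w}"
  have b1: "P B1 \<le> exp (- real n * \<eta>)"
    proof -
    have "P B1 = Pm J n L E1" unfolding P_def B1_def J_def by (rule M1[OF ctx])
    also have "Pm J n L E1 \<le> exp (- real n * \<eta>)" unfolding E1_def J_def by (rule bound1[OF ctx eta_pos])
    finally show ?thesis .
  qed
  have b2: "P B2 \<le> exp (- real n * \<eta>)"
    proof -
    have "P B2 = Pm J n L E2" unfolding P_def B2_def J_def by (rule M1[OF ctx])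
    also have "Pm J n L E2 \<le> exp (- real n * \<eta>)" unfolding E2_def J_def by (rule bound2[OF ctx])
    finally show ?thesis .
  qed
  have b3: "P B3 \<le> exp (- real n * \<eta>)"
    proof -
    have "P B3 = Pm J n L E3" unfolding P_def B3_def J_def by (rule M1[OF ctx])
    also have "Pm J n L E3 \<le> exp (- real n * \<eta>)" unfolding E3_def J_def by (rule bound3[OF ctx])
    finally show ?thesis .
  qed
  have b4: "P B4 \<le> exp (- real n * \<eta>)"
    proof -
    have "P B4 = Pm J n L E4" unfolding P_def B4_def J_def by (rule M1[OF ctx])
    also have "Pm J n L E4 \<le> exp (- real n * \<eta>)" unfolding E4_def J_def by (rule bound4[OF ctx])
    finally show ?thesis .
  qed
  have b5: "P B5 \<le> exp (- real n * \<eta>)"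
    proof -
    have "P B5 = Pm J n L E5" unfolding P_def B5_def J_def by (rule M1[OF ctx])
    also have "Pm J n L E5 \<le> exp (- real n * \<eta>)" unfolding E5_def J_def by (rule bound5[OF ctx rate_c])
    finally show ?thesis .
  qed
  have b6: "P B6 \<le> exp (- real n * \<eta>)"
    unfolding P_def B6_def J_def by (rule B6[OF ctx rate_i])
  have b0: "Pc n M PX PYX PZX f g h d D = P Good"
    unfolding P_def Good_def by (rule B0[OF ctx])
  have sub: "Good \<subseteq> S \<union> (B1 \<union> (B2 \<union> (B3 \<union> (B4 \<union> (B5 \<union> B6)))))"
  proof
    fix p assume p: "p \<in> Good"
    obtain w xs ys ss z xh where pp: "p = (w, xs, ys, ss, z, xh)" by (cases p)
    show "p \<in> S \<union> (B1 \<union> (B2 \<union> (B3 \<union> (B4 \<union> (B5 \<union> B6)))))"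
      using p unfolding pp Good_def S_def B1_def B2_def B3_def B4_def B5_def B6_def
        E1_def E2_def E3_def E4_def E5_def J_def A1_def A2_def A3_def A4_def A5_def A6_def A7_def
      by auto
  qed
  have "P Good \<le> P S + (P B1 + (P B2 + (P B3 + (P B4 + (P B5 + P B6)))))"
  proof -
    have "P Good \<le> P S + P (B1 \<union> (B2 \<union> (B3 \<union> (B4 \<union> (B5 \<union> B6)))))"
      unfolding P_def by (rule PrWT_union[OF sub])
    also have "P (B1 \<union> (B2 \<union> (B3 \<union> (B4 \<union> (B5 \<union> B6))))) \<le> P B1 + P (B2 \<union> (B3 \<union> (B4 \<union> (B5 \<union> B6))))"
      unfolding P_def by (rule PrWT_union) simp
    also have "P (B2 \<union> (B3 \<union> (B4 \<union> (B5 \<union> B6)))) \<le> P B2 + P (B3 \<union> (B4 \<union> (B5 \<union> B6)))"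
      unfolding P_def by (rule PrWT_union) simp
    also have "P (B3 \<union> (B4 \<union> (B5 \<union> B6))) \<le> P B3 + P (B4 \<union> (B5 \<union> B6))"
      unfolding P_def by (rule PrWT_union) simp
    also have "P (B4 \<union> (B5 \<union> B6)) \<le> P B4 + P (B5 \<union> B6)"
      unfolding P_def by (rule PrWT_union) simp
    also have "P (B5 \<union> B6) \<le> P B5 + P B6"
      unfolding P_def by (rule PrWT_union) simp
    finally show ?thesis by simp
  qed
  then show ?thesis using b0 b1 b2 b3 b4 b5 b6 unfolding P_def S_def by linarith
qed

end
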